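(* Let $X\in\mathbb{R}^{n\times p}$, $y\in\mathbb{R}^n$, $\lambda\ge0$, $\mu>0$, $A=X^\top X$, $K\ge1$, and a partition $I_1,\dots,I_K$ of $\{1,\dots,p\}$ into nonempty sets with $p_i=|I_i|$. Let $\{g^t=(\beta^t,z^t,u^t)\}_{t\ge0}$ be generated by Algorithm 3 (defined below) from an arbitrary initial point, and assume the set $\Omega^*$ of saddle points of the Lagrangian $L$ (defined below) is nonempty. Then: (1) (Global convergence) $g^t$ converges to some $g^*=(\beta^*,z^*,u^* )\in\Omega^*$; (2) (Rate) for every integer $T>0$, $$\|g^T-g^{T+1}\|_{H_K}^2\le\frac{1}{T+1}\|g^0-g^*\|_{H_K}^2,$$ where $H_K$ is the positive definite matrix defined below.
   Context: Notation: $\mathcal{S}_\tau(v)=\mathrm{sign}(v)\odot\max\{|v|-\tau,0\}$ (componentwise); $\lambda_{\max}$ is the largest eigenvalue; $\|v\|_H=\sqrt{v^\top Hv}$. $X_i$ is the submatrix of $X$ with columns in $I_i$, $A_i=X^\top X_i\in\mathbb{R}^{p\times p_i}$, $\beta_{i\cdot}\in\mathbb{R}^{p_i}$ is the subvector of $\beta$ indexed by $I_i$; vectors $g$ are ordered as $g=(\beta_{1\cdot},\dots,\beta_{K\cdot},z,u)$. Let $\mathcal{Z}_0=\{z:\|z\|_\infty\le n\lambda\}$, $\delta_{\mathcal{Z}_0}$ its indicator ($0$ on $\mathcal{Z}_0$, $+\infty$ off it). Lagrangian: $L(\beta,z;u)=\sum_{i=1}^K\|\beta_{i\cdot}\|_1+\delta_{\mathcal{Z}_0}(z)-u^\top(\sum_{i=1}^KA_i\beta_{i\cdot}-z-X^\top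 y)$; $\Omega^*$ is the set of $(\beta^*,z^*,u^* )$ with $L(\beta^*,z^*,u)\le L(\beta^*,z^*,u^* )\le L(\beta,z,u^* )$ for all $(\beta,z,u)$. Algorithm 3: set $\eta_i=\lambda_{\max}(\mu A_i^\top A_i)+1$ for $i=1,\dots,K$. For $t\ge0$: $\beta^{t+1}_{i\cdot}=\mathcal{S}_{1/\eta_i}(\beta^t_{i\cdot}+A_i^\top u^t/\eta_i)$ for each $i$; $z^{t+1}=\min\{\max\{z^t-u^t/\mu,-n\lambda\},n\lambda\}$; $u^{t+1}=u^t-\frac{\mu}{K+1}[2(\sum_iA_i\beta^{t+1}_{i\cdot}-z^{t+1}-X^\top y)-(\sum_iA_i\beta^{t}_{i\cdot}-z^t-X^\top y)]$. Matrix: with $G=(A_1,\dots,A_K,-I_p)\in\mathbb{R}^{p\times 2p}$ and $\tilde\Lambda_K=\mathrm{diag}(\eta_1I_{p_1},\dots,\eta_KI_{p_K},\mu I_p)$ (equivalently $\mathrm{diag}(\mu A_1^\top A_1+S_1',\dots,\mu A_K^\top A_K+S_K',\mu I_p)$ with $S_i'=\eta_iI_{p_i}-\mu A_i^\top A_i$), $$H_K=\begin{pmatrix}\tilde\Lambda_K & G^\top\\ G & \frac{K+1}{\mu}I_p\end{pmatrix}.$$ *)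

theory Defs
  imports Complex_Main "HOL-Library.Extended_Real"
begin

text \<open>Data: X is an n x p matrix with rows indexed by the finite type 'n and columns
by the finite type 'p (so n = card (UNIV :: 'n set), p = CARD('p)); vectors are functions on
the index type.\<close>

definition gram :: "('n::finite \<Rightarrow> 'p::finite \<Rightarrow> real) \<Rightarrow> 'p \<Rightarrow> 'p \<Rightarrow> real" where
  "gram X j k = (\<Sum>r\<in>UNIV. X r j * X r k)"

definition Xty :: "('n::finite \<Rightarrow> 'p::finite \<Rightarrow> real) \<Rightarrow> ('n \<Rightarrow> real) \<Rightarrow> 'p \<Rightarrow> real" where
  "Xty X y k = (\<Sum>r\<in>UNIV. X r k * y r)"

definition soft_thr :: "real \<Rightarrow> real \<Rightarrow> real" where
  "soft_thr \<tau> v = sgn v * max (\<bar>v\<bar> - \<tau>) 0"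

definition is_partition :: "nat \<Rightarrow> (nat \<Rightarrow> 'p set) \<Rightarrow> bool" where
  "is_partition K I \<longleftrightarrow> K \<ge> 1 \<and> (\<forall>i\<in>{1..K}. I i \<noteq> {}) \<and>
     (\<forall>i\<in>{1..K}. \<forall>j\<in>{1..K}. i \<noteq> j \<longrightarrow> I i \<inter> I j = {}) \<and>
     (\<Union>i\<in>{1..K}. I i) = UNIV"

text \<open>Real eigenvalues of the principal submatrix of M with rows/columns in I.\<close>
definition eigvals_on :: "'p set \<Rightarrow> ('p \<Rightarrow> 'p \<Rightarrow> real) \<Rightarrow> real set" where
  "eigvals_on I M = {c. \<exists>v. v \<noteq> (\<lambda>_. 0) \<and> (\<forall>k. k \<notin> I \<longrightarrow> v k = 0) \<and>
       (\<forall>k\<in>I. (\<Sum>l\<in>I. M k l * v l) = c * v k)}"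

definition lambda_max_on :: "'p set \<Rightarrow> ('p \<Rightarrow> 'p \<Rightarrow> real) \<Rightarrow> real" where
  "lambda_max_on I M = Max (eigvals_on I M)"

text \<open>eta_i = lambda_max(mu A_i^T A_i) + 1, where (A_i^T A_i)_{kl} = sum_j A_{jk} A_{jl}, k,l in I_i.\<close>
definition eta :: "('n::finite \<Rightarrow> 'p::finite \<Rightarrow> real) \<Rightarrow> real \<Rightarrow> (nat \<Rightarrow> 'p set) \<Rightarrow> nat \<Rightarrow> real" where
  "eta X \<mu> I i = lambda_max_on (I i) (\<lambda>k l. \<mu> * (\<Sum>j\<in>UNIV. gram X j k * gram X j l)) + 1"

definition resid :: "('n::finite \<Rightarrow> 'p::finite \<Rightarrow> real) \<Rightarrow> ('n \<Rightarrow> real) \<Rightarrow> nat \<Rightarrow> (nat \<Rightarrow> 'p set)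
    \<Rightarrow> ('p \<Rightarrow> real) \<Rightarrow> ('p \<Rightarrow> real) \<Rightarrow> 'p \<Rightarrow> real" where
  "resid X y K I \<beta> z j = (\<Sum>i\<in>{1..K}. \<Sum>k\<in>I i. gram X j k * \<beta> k) - z j - Xty X y j"

text \<open>Lagrangian, with the indicator of Z_0 taking values in the extended reals.\<close>
definition lagr :: "('n::finite \<Rightarrow> 'p::finite \<Rightarrow> real) \<Rightarrow> ('n \<Rightarrow> real) \<Rightarrow> real \<Rightarrow> nat \<Rightarrow> (nat \<Rightarrow> 'p set)
    \<Rightarrow> ('p \<Rightarrow> real) \<Rightarrow> ('p \<Rightarrow> real) \<Rightarrow> ('p \<Rightarrow> real) \<Rightarrow> ereal" where
  "lagr X y lam K I \<beta> z u =
     ereal ((\<Sum>i\<in>{1..K}. \<Sum>k\<in>I i. \<bar>\<beta> k\<bar>) - (\<Sum>j\<in>UNIV. u j * resid X y K I \<beta> z j))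
     + (if (\<forall>j. \<bar>z j\<bar> \<le> real (card (UNIV :: 'n set)) * lam) then 0 else \<infinity>)"

definition saddle :: "('n::finite \<Rightarrow> 'p::finite \<Rightarrow> real) \<Rightarrow> ('n \<Rightarrow> real) \<Rightarrow> real \<Rightarrow> nat \<Rightarrow> (nat \<Rightarrow> 'p set)
    \<Rightarrow> ('p \<Rightarrow> real) \<Rightarrow> ('p \<Rightarrow> real) \<Rightarrow> ('p \<Rightarrow> real) \<Rightarrow> bool" where
  "saddle X y lam K I \<beta>s zs us \<longleftrightarrow>
     (\<forall>\<beta> z u. lagr X y lam K I \<beta>s zs u \<le> lagr X y lam K I \<beta>s zs us \<and>
              lagr X y lam K I \<beta>s zs us \<le> lagr X y lam K I \<beta> z us)"

definition alg3 :: "('n::finite \<Rightarrow> 'p::finite \<Rightarrow> real) \<Rightarrow> ('n \<Rightarrow> real) \<Rightarrow> real \<Rightarrow> real \<Rightarrow> nat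
    \<Rightarrow> (nat \<Rightarrow> 'p set) \<Rightarrow> (nat \<Rightarrow> 'p \<Rightarrow> real) \<Rightarrow> (nat \<Rightarrow> 'p \<Rightarrow> real) \<Rightarrow> (nat \<Rightarrow> 'p \<Rightarrow> real) \<Rightarrow> bool" where
  "alg3 X y lam \<mu> K I \<beta> z u \<longleftrightarrow> (\<forall>t.
     (\<forall>i\<in>{1..K}. \<forall>k\<in>I i. \<beta> (Suc t) k =
         soft_thr (1 / eta X \<mu> I i) (\<beta> t k + (\<Sum>j\<in>UNIV. gram X j k * u t j) / eta X \<mu> I i)) \<and>
     (\<forall>j. z (Suc t) j = min (max (z t j - u t j / \<mu>) (- (real (card (UNIV :: 'n set)) * lam))) (real (card (UNIV :: 'n set)) * lam)) \<and>
     (\<forall>j. u (Suc t) j = u t j - \<mu> / (real K + 1) *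
         (2 * resid X y K I (\<beta> (Suc t)) (z (Suc t)) j - resid X y K I (\<beta> t) (z t) j)))"

text \<open>The matrix H_K, indexed by (('p + 'p) + 'p): Inl (Inl k) = beta-coordinate k,
 Inl (Inr k) = z-coordinate k, Inr j = u-coordinate j.\<close>
definition Lam :: "('n::finite \<Rightarrow> 'p::finite \<Rightarrow> real) \<Rightarrow> real \<Rightarrow> nat \<Rightarrow> (nat \<Rightarrow> 'p set)
    \<Rightarrow> ('p + 'p) \<Rightarrow> ('p + 'p) \<Rightarrow> real" where
  "Lam X \<mu> K I a b = (case (a, b) of
      (Inl k, Inl l) \<Rightarrow> (if k = l then (\<Sum>i\<in>{1..K}. if k \<in> I i then eta X \<mu> I i else 0) else 0)
    | (Inr k, Inr l) \<Rightarrow> (if k = l then \<mu> else 0)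
    | _ \<Rightarrow> 0)"

definition Gmat :: "('n::finite \<Rightarrow> 'p::finite \<Rightarrow> real) \<Rightarrow> 'p \<Rightarrow> ('p + 'p) \<Rightarrow> real" where
  "Gmat X j a = (case a of Inl k \<Rightarrow> gram X j k | Inr k \<Rightarrow> (if j = k then -1 else 0))"

definition Hmat :: "('n::finite \<Rightarrow> 'p::finite \<Rightarrow> real) \<Rightarrow> real \<Rightarrow> nat \<Rightarrow> (nat \<Rightarrow> 'p set)
    \<Rightarrow> (('p + 'p) + 'p) \<Rightarrow> (('p + 'p) + 'p) \<Rightarrow> real" where
  "Hmat X \<mu> K I a b = (case (a, b) of
      (Inl a', Inl b') \<Rightarrow> Lam X \<mu> K I a' b'
    | (Inl a', Inr j) \<Rightarrow> Gmat X j a'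
    | (Inr j, Inl b') \<Rightarrow> Gmat X j b'
    | (Inr j, Inr j') \<Rightarrow> (if j = j' then (real K + 1) / \<mu> else 0))"

definition gvec :: "('p \<Rightarrow> real) \<Rightarrow> ('p \<Rightarrow> real) \<Rightarrow> ('p \<Rightarrow> real) \<Rightarrow> (('p + 'p) + 'p) \<Rightarrow> real" where
  "gvec \<beta> z u a = (case a of Inl (Inl k) \<Rightarrow> \<beta> k | Inl (Inr k) \<Rightarrow> z k | Inr k \<Rightarrow> u k)"

definition Hnorm_sq :: "('n::finite \<Rightarrow> 'p::finite \<Rightarrow> real) \<Rightarrow> real \<Rightarrow> nat \<Rightarrow> (nat \<Rightarrow> 'p set)
    \<Rightarrow> ((('p + 'p) + 'p) \<Rightarrow> real) \<Rightarrow> real" where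
  "Hnorm_sq X \<mu> K I g = (\<Sum>a\<in>UNIV. \<Sum>b\<in>UNIV. g a * Hmat X \<mu> K I a b * g b)"

end

theory Submission
  imports Defs "HOL-Analysis.Analysis"
begin

definition clip :: "real \<Rightarrow> real \<Rightarrow> real \<Rightarrow> real" where
  "clip lo hi v = min (max v lo) hi"

lemma soft_alt: "\<tau> \<ge> 0 \<Longrightarrow> soft_thr \<tau> v = v - clip (-\<tau>) \<tau> v"
  by (auto simp: soft_thr_def clip_def sgn_if max_def min_def)

lemma clip_mono: "lo \<le> hi \<Longrightarrow> v \<le> v' \<Longrightarrow> clip lo hi v \<le> clip lo hi v'"
  by (auto simp: clip_def)

lemma clip_res_mono: "lo \<le> hi \<Longrightarrow> v \<le> v' \<Longrightarrow> v - clip lo hi v \<le> v' - clip lo hi v'"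
  by (auto simp: clip_def min_def max_def)

lemma same_sign_prod:
  fixes a b a' b' :: real
  assumes "a \<le> a' \<and> b \<le> b' \<or> a' \<le> a \<and> b' \<le> b"
  shows "(a - a') * (b - b') \<ge> 0"
  using assms by (metis diff_ge_0_iff_ge diff_le_0_iff_le mult_nonneg_nonneg mult_nonpos_nonpos)

lemma clip_firm:
  assumes "lo \<le> hi"
  shows "((v - clip lo hi v) - (v' - clip lo hi v')) * (clip lo hi v - clip lo hi v') \<ge> 0"
proof (cases "v \<le> v'")
  case True thus ?thesis using same_sign_prod clip_mono[OF assms] clip_res_mono[OF assms] by blast
next
  case False thus ?thesis using same_sign_prod clip_mono[OF assms] clip_res_mono[OF assms] by (meson linear)
qed

lemma soft_firm:
  assumes "\<tau> \<ge> 0"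
  shows "((v - soft_thr \<tau> v) - (v' - soft_thr \<tau> v')) * (soft_thr \<tau> v - soft_thr \<tau> v') \<ge> 0"
proof -
  have "-\<tau> \<le> \<tau>" using assms by simp
  note c = clip_firm[OF this, of v v']
  have e1: "v - soft_thr \<tau> v = clip (-\<tau>) \<tau> v" "v' - soft_thr \<tau> v' = clip (-\<tau>) \<tau> v'"
    using soft_alt[OF assms] by simp_all
  have e2: "soft_thr \<tau> v - soft_thr \<tau> v' = (v - clip (-\<tau>) \<tau> v) - (v' - clip (-\<tau>) \<tau> v')"
    using soft_alt[OF assms] by simp
  show ?thesis unfolding e1 e2 using c by (simp only: mult.commute)
qed

lemma soft_fixed_sub:
  assumes "\<tau> > 0" "soft_thr \<tau> (a + \<tau> * s) = a"
  shows "\<bar>b\<bar> \<ge> \<bar>a\<bar> + s * (b - a)"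
proof -
  consider "a > 0" | "a < 0" | "a = 0" by linarith
  then show ?thesis
  proof cases
    case 1
    then have "\<tau> * s = \<tau>" using assms
      by (auto simp: soft_thr_def sgn_if max_def split: if_splits)
    then have "\<tau> * (s - 1) = 0" by (simp add: right_diff_distrib)
    then have "s = 1" using assms(1) by simp
    then show ?thesis using 1 by simp
  next
    case 2
    then have "\<tau> * s = - \<tau>" using assms
      by (auto simp: soft_thr_def sgn_if max_def split: if_splits)
    then have "\<tau> * (s + 1) = 0" by (simp add: distrib_left)
    then have "s = -1" using assms(1) by simp
    then show ?thesis using 2 by simp
  next
    case 3
    then have "\<bar>\<tau> * s\<bar> \<le> \<tau>" using assms
      by (auto simp: soft_thr_def sgn_if max_def split: if_splits)
    then have "\<bar>s\<bar> \<le> 1" using assms by (simp add: abs_mult)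
    then have "s * b \<le> \<bar>b\<bar>"
      by (metis abs_ge_self abs_mult mult_left_le_one_le abs_ge_zero order_trans)
    then show ?thesis using 3 by simp
  qed
qed

lemma soft_fixed_sup:
  assumes "\<tau> > 0" "\<forall>b. \<bar>b\<bar> \<ge> \<bar>a\<bar> + s * (b - a)"
  shows "soft_thr \<tau> (a + \<tau> * s) = a"
proof -
  have i1: "\<bar>2*a\<bar> \<ge> \<bar>a\<bar> + s * (2*a - a)" and i2: "\<bar>0\<bar> \<ge> \<bar>a\<bar> + s * (0 - a)"
    using assms(2) by blast+
  have i3: "\<bar>1\<bar> \<ge> \<bar>a\<bar> + s * (1 - a)" and i4: "\<bar>-1\<bar> \<ge> \<bar>a\<bar> + s * (-1 - a)"
    using assms(2) by blast+
  consider "a > 0" | "a < 0" | "a = 0" by linarith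
  then show ?thesis
  proof cases
    case 1
    have "s * a \<le> a" using i1 1 by simp
    moreover have "a \<le> s * a" using i2 1 by simp
    ultimately have "s * a = 1 * a" by simp
    then have "s = 1" using 1 by (simp only: mult_cancel_right) simp
    then show ?thesis using 1 assms(1) by (auto simp: soft_thr_def sgn_if max_def)
  next
    case 2
    have "s * a \<le> - a" using i1 2 by simp
    moreover have "- a \<le> s * a" using i2 2 by simp
    ultimately have "s * a = (-1) * a" by simp
    then have "s = -1" using 2 by (simp only: mult_cancel_right) simp
    then show ?thesis using 2 assms(1) by (auto simp: soft_thr_def sgn_if max_def)
  next
    case 3
    have "s \<le> 1" "- s \<le> 1" using i3 i4 3 by simp_all
    then have "\<bar>s\<bar> \<le> 1" by simp
    then have "\<bar>\<tau> * s\<bar> \<le> \<tau>" using assms(1) by (simp add: abs_mult mult_left_le)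
    then show ?thesis using 3 by (auto simp: soft_thr_def sgn_if max_def)
  qed
qed

lemma clip_fixed_sub:
  assumes "\<mu> > 0" "lo \<le> hi" "clip lo hi (z - u / \<mu>) = z"
  shows "lo \<le> z \<and> z \<le> hi \<and> (\<forall>c. lo \<le> c \<and> c \<le> hi \<longrightarrow> u * (c - z) \<ge> 0)"
proof -
  have r: "lo \<le> z \<and> z \<le> hi" using assms(2,3) by (auto simp: clip_def)
  have "u * (c - z) \<ge> 0" if c: "lo \<le> c" "c \<le> hi" for c
  proof (cases "u = 0")
    case False
    show ?thesis
    proof (cases "u > 0")
      case True
      then have "u / \<mu> > 0" using assms by simp
      then have "z = lo" using assms(3) r by (auto simp: clip_def min_def max_def split: if_splits)
      then show ?thesis using True c by simp
    next
      case f: False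
      then have "u / \<mu> < 0" using False assms by (simp add: divide_neg_pos)
      then have "z = hi" using assms(3) r by (auto simp: clip_def min_def max_def split: if_splits)
      then show ?thesis using f c by (simp add: mult_nonpos_nonpos)
    qed
  qed simp
  with r show ?thesis by blast
qed

lemma clip_fixed_sup:
  assumes "\<mu> > 0" "lo \<le> z" "z \<le> hi" "\<forall>c. lo \<le> c \<and> c \<le> hi \<longrightarrow> u * (c - z) \<ge> 0"
  shows "clip lo hi (z - u / \<mu>) = z"
proof -
  consider "u = 0" | "u > 0" | "u < 0" by linarith
  then show ?thesis
  proof cases
    case 1 then show ?thesis using assms by (simp add: clip_def)
  next
    case 2
    have "u * (lo - z) \<ge> 0" using assms by auto
    then have "z = lo" using 2 assms(2) by (smt (verit) mult_pos_neg)
    moreover have "u / \<mu> > 0" using 2 assms by simp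
    ultimately show ?thesis using assms by (simp add: clip_def)
  next
    case 3
    have "u * (hi - z) \<ge> 0" using assms by auto
    then have "z = hi" using 3 assms(3) by (smt (verit) mult_neg_pos)
    moreover have "u / \<mu> < 0" using 3 assms by (simp add: divide_neg_pos)
    ultimately show ?thesis using assms by (simp add: clip_def)
  qed
qed

lemma quad_aux: "(c::real) \<noteq> 0 \<Longrightarrow> (2 * (a / c) * a + (a / c)\<^sup>2 * b) * c^2 = a^2 * (2 * c + b)"
  by (simp add: field_simps power2_eq_square)

lemma quad_zero:
  fixes a b :: real
  assumes "\<forall>t. 2 * t * a + t\<^sup>2 * b \<le> 0"
  shows "a = 0"
proof -
  define c where "c = \<bar>b\<bar> + 1"
  have p: "c > 0" unfolding c_def by simp
  have "2 * (a / c) * a + (a / c)\<^sup>2 * b \<le> 0" using assms by blast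
  then have "(2 * (a / c) * a + (a / c)\<^sup>2 * b) * c^2 \<le> 0" using p
    by (simp add: mult_nonpos_nonneg)
  then have "a^2 * (2 * c + b) \<le> 0" using quad_aux[of c a b] p by simp
  moreover have "2 * c + b > 0" unfolding c_def by (cases "b \<ge> 0") auto
  ultimately have "a^2 \<le> 0" by (simp add: mult_le_0_iff)
  then show ?thesis by simp
qed


definition Bq :: "'p set \<Rightarrow> ('p \<Rightarrow> 'p \<Rightarrow> real) \<Rightarrow> ('p \<Rightarrow> real) \<Rightarrow> ('p \<Rightarrow> real) \<Rightarrow> real" where
  "Bq I M u v = (\<Sum>k\<in>I. \<Sum>l\<in>I. u k * M k l * v l)"

lemma Bq_sym: "\<forall>k l. M k l = M l k \<Longrightarrow> Bq I M u v = Bq I M v u"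
  unfolding Bq_def by (subst sum.swap) (simp add: mult.commute mult.left_commute)

lemma Bq_expand:
  assumes "\<forall>k l. M k l = M l k"
  shows "Bq I M (\<lambda>k. u k + t * w k) (\<lambda>k. u k + t * w k) = Bq I M u u + 2 * t * Bq I M w u + t\<^sup>2 * Bq I M w w"
proof -
  have "Bq I M (\<lambda>k. u k + t * w k) (\<lambda>k. u k + t * w k) = Bq I M u u + t * Bq I M w u + t * Bq I M u w + t\<^sup>2 * Bq I M w w"
    unfolding Bq_def by (simp add: algebra_simps sum.distrib sum_distrib_left power2_eq_square)
  then show ?thesis using Bq_sym[OF assms, of I u w] by simp
qed

lemma Bq_delta:
  assumes "k \<in> I" "finite I"
  shows "Bq I M (\<lambda>l. if l = k then 1 else 0) u = (\<Sum>l\<in>I. M k l * u l)"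
proof -
  have "Bq I M (\<lambda>l. if l = k then 1 else 0) u = (\<Sum>ka\<in>I. if ka = k then (\<Sum>l\<in>I. M ka l * u l) else 0)"
    unfolding Bq_def by (rule sum.cong) auto
  also have "\<dots> = (\<Sum>l\<in>I. M k l * u l)" using assms by (simp add: sum.delta')
  finally show ?thesis .
qed

lemma Bq_delta2: "k \<in> I \<Longrightarrow> finite I \<Longrightarrow> Bq I M (\<lambda>l. if l = k then 1 else 0) (\<lambda>l. if l = k then 1 else 0) = M k k"
proof -
  assume a: "k \<in> I" "finite I"
  have "(\<Sum>l\<in>I. M k l * (if l = k then 1 else 0)) = (\<Sum>l\<in>I. if l = k then M k l else 0)"
    by (rule sum.cong) auto
  then show ?thesis using a by (simp add: Bq_delta sum.delta')
qed

lemma Bq_id: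
  assumes "finite I"
  shows "Bq I (\<lambda>k l. if k = l then 1 else 0) u v = (\<Sum>k\<in>I. u k * v k)"
proof -
  have "(\<Sum>l\<in>I. u k * (if k = l then 1 else 0) * v l) = (if k \<in> I then u k * v k else 0)" for k
  proof -
    have "(\<Sum>l\<in>I. u k * (if k = l then 1 else 0) * v l) = (\<Sum>l\<in>I. if l = k then u k * v k else 0)"
      by (rule sum.cong) auto
    then show ?thesis using assms by (simp add: sum.delta')
  qed
  then show ?thesis unfolding Bq_def by simp
qed

lemma eig_orth:
  fixes M :: "'p::finite \<Rightarrow> 'p \<Rightarrow> real"
  assumes sym: "\<forall>k l. M k l = M l k"
    and v: "\<forall>k\<in>I. (\<Sum>l\<in>I. M k l * v l) = c * v k"
    and w: "\<forall>k\<in>I. (\<Sum>l\<in>I. M k l * w l) = d * w k"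
    and "c \<noteq> d"
  shows "(\<Sum>k\<in>I. v k * w k) = 0"
proof -
  have "Bq I M v w = (\<Sum>k\<in>I. v k * (\<Sum>l\<in>I. M k l * w l))"
    unfolding Bq_def by (simp add: sum_distrib_left mult.assoc)
  also have "\<dots> = d * (\<Sum>k\<in>I. v k * w k)" using w by (simp add: sum_distrib_left mult.commute mult.left_commute)
  finally have 1: "Bq I M v w = d * (\<Sum>k\<in>I. v k * w k)" .
  have "Bq I M w v = (\<Sum>k\<in>I. w k * (\<Sum>l\<in>I. M k l * v l))"
    unfolding Bq_def by (simp add: sum_distrib_left mult.assoc)
  also have "\<dots> = c * (\<Sum>k\<in>I. v k * w k)" using v by (simp add: sum_distrib_left mult.commute mult.left_commute)
  finally have 2: "Bq I M w v = c * (\<Sum>k\<in>I. v k * w k)" .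
  from 1 2 Bq_sym[OF sym, of I v w] have "(c - d) * (\<Sum>k\<in>I. v k * w k) = 0" by (simp add: algebra_simps)
  then show ?thesis using assms(4) by simp
qed

lemma eig_finite:
  fixes M :: "'p::finite \<Rightarrow> 'p \<Rightarrow> real"
  assumes sym: "\<forall>k l. M k l = M l k"
  shows "finite (eigvals_on I M)"
proof -
  let ?E = "eigvals_on I M"
  define P where "P c v \<longleftrightarrow> v \<noteq> (\<lambda>_. 0) \<and> (\<forall>k. k \<notin> I \<longrightarrow> v k = 0) \<and>
       (\<forall>k\<in>I. (\<Sum>l\<in>I. M k l * v l) = c * v k)" for c v
  define ev where "ev c = (SOME v. P c v)" for c
  have evP: "P c (ev c)" if "c \<in> ?E" for c
  proof -
    have "\<exists>v. P c v" using that unfolding eigvals_on_def P_def by blast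
    then show ?thesis unfolding ev_def by (rule someI_ex)
  qed
  define vv :: "real \<Rightarrow> real^'p" where "vv c = (\<chi> k. ev c k)" for c
  have inner_vv: "vv c \<bullet> vv d = (\<Sum>k\<in>I. ev c k * ev d k)" if "c \<in> ?E" "d \<in> ?E" for c d
  proof -
    have "vv c \<bullet> vv d = (\<Sum>k\<in>UNIV. ev c k * ev d k)" unfolding vv_def inner_vec_def by simp
    also have "\<dots> = (\<Sum>k\<in>I. ev c k * ev d k)"
      by (rule sum.mono_neutral_right) (use evP[OF that(1)] in \<open>auto simp: P_def\<close>)
    finally show ?thesis .
  qed
  have orth: "vv c \<bullet> vv d = 0" if "c \<in> ?E" "d \<in> ?E" "c \<noteq> d" for c d
    unfolding inner_vv[OF that(1,2)]
    by (rule eig_orth[OF sym, of I "ev c" c "ev d" d]) (use evP[OF that(1)] evP[OF that(2)] that(3) in \<open>auto simp: P_def\<close>)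
  have nz: "vv c \<noteq> 0" if "c \<in> ?E" for c
  proof
    assume "vv c = 0"
    then have "ev c k = 0" for k unfolding vv_def by (metis vec_lambda_beta zero_index)
    then show False using evP[OF that] unfolding P_def by auto
  qed
  have inj: "inj_on vv ?E"
  proof (rule inj_onI)
    fix c d assume cd: "c \<in> ?E" "d \<in> ?E" "vv c = vv d"
    show "c = d"
    proof (rule ccontr)
      assume "c \<noteq> d"
      then have "vv c \<bullet> vv c = 0" using orth[OF cd(1,2)] cd(3) by simp
      then show False using nz[OF cd(1)] by simp
    qed
  qed
  have "pairwise orthogonal (vv ` ?E)"
    unfolding pairwise_def orthogonal_def using orth by blast
  moreover have "0 \<notin> vv ` ?E" using nz by auto
  ultimately have "independent (vv ` ?E)" by (rule pairwise_orthogonal_independent)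
  then have "finite (vv ` ?E)" using independent_bound by blast
  then show ?thesis using inj finite_imageD by blast
qed


lemma delta_sum:
  assumes "finite I" "k \<in> I"
  shows "(\<Sum>l\<in>I. (if k = l then 1 else 0) * f l) = (f k::real)"
proof -
  have "(\<Sum>l\<in>I. (if k = l then 1 else 0) * f l) = (\<Sum>l\<in>I. if l = k then f l else 0)"
    by (rule sum.cong) auto
  then show ?thesis using assms by (simp add: sum.delta')
qed

lemma rayleigh:
  fixes M :: "'p::finite \<Rightarrow> 'p \<Rightarrow> real"
  assumes sym: "\<forall>k l. M k l = M l k" and ne: "I \<noteq> {}"
  shows "Bq I M v v \<le> lambda_max_on I M * (\<Sum>k\<in>I. (v k)\<^sup>2)"
proof -
  have finI: "finite I" by simp
  define q :: "real^'p \<Rightarrow> real" where "q x = Bq I M (vec_nth x) (vec_nth x)" for x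
  define S :: "(real^'p) set" where "S = sphere 0 1 \<inter> {x. \<forall>k. k \<notin> I \<longrightarrow> x$k = 0}"
  have cl: "closed {x::real^'p. \<forall>k. k \<notin> I \<longrightarrow> x$k = 0}"
  proof (rule closed_Collect_all)
    fix k
    show "closed {x::real^'p. k \<notin> I \<longrightarrow> x$k = 0}"
    proof (cases "k \<in> I")
      case True then show ?thesis by simp
    next
      case False
      have "closed {x::real^'p. x$k = 0}"
        by (rule closed_Collect_eq) (auto intro!: continuous_intros)
      then show ?thesis using False by simp
    qed
  qed
  have cS: "compact S" unfolding S_def using cl compact_sphere by blast
  obtain k0 where k0: "k0 \<in> I" using ne by blast
  have "\<forall>k. k \<notin> I \<longrightarrow> axis k0 (1::real) $ k = 0" using k0 by (auto simp: axis_def)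
  then have "axis k0 1 \<in> S" unfolding S_def by simp
  then have neS: "S \<noteq> {}" by blast
  have cq: "continuous_on S q" unfolding q_def Bq_def by (auto intro!: continuous_intros)
  obtain x0 where x0: "x0 \<in> S" and x0max: "\<forall>y\<in>S. q y \<le> q x0"
    using continuous_attains_sup[OF cS neS cq] by blast
  define c where "c = q x0"
  have nrm: "(norm x)\<^sup>2 = (\<Sum>k\<in>I. (x$k)\<^sup>2)" if "\<forall>k. k \<notin> I \<longrightarrow> x$k = 0" for x :: "real^'p"
  proof -
    have "(norm x)\<^sup>2 = (\<Sum>k\<in>UNIV. (x$k)\<^sup>2)" unfolding power2_norm_eq_inner inner_vec_def
      by (simp add: power2_eq_square)
    also have "\<dots> = (\<Sum>k\<in>I. (x$k)\<^sup>2)"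
      by (rule sum.mono_neutral_right) (use that in auto)
    finally show ?thesis .
  qed
  have R: "Bq I M w w \<le> c * (\<Sum>k\<in>I. (w k)\<^sup>2)" if wI: "\<forall>k. k \<notin> I \<longrightarrow> w k = 0" for w
  proof -
    define x :: "real^'p" where "x = (\<chi> k. w k)"
    have xI: "\<forall>k. k \<notin> I \<longrightarrow> x$k = 0" using wI unfolding x_def by simp
    have vx: "vec_nth x = w" unfolding x_def by (rule ext) simp
    have qx: "q x = Bq I M w w" unfolding q_def vx by simp
    have nx: "(norm x)\<^sup>2 = (\<Sum>k\<in>I. (w k)\<^sup>2)" using nrm[OF xI] unfolding x_def by simp
    show ?thesis
    proof (cases "x = 0")
      case True
      then have "w k = 0" for k unfolding x_def by (metis vec_lambda_beta zero_index)
      then show ?thesis unfolding Bq_def by simp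
    next
      case False
      define y where "y = x /\<^sub>R norm x"
      have "y \<in> S" unfolding S_def y_def using False xI by auto
      then have "q y \<le> c" using x0max c_def by auto
      moreover have "q y = q x / (norm x)\<^sup>2" unfolding q_def y_def Bq_def
        by (simp add: sum_divide_distrib power2_eq_square field_simps)
      ultimately have "q x / (norm x)\<^sup>2 \<le> c" by simp
      then have "q x \<le> c * (norm x)\<^sup>2" using False by (simp add: divide_le_eq)
      then show ?thesis using qx nx by simp
    qed
  qed
  have x0I: "\<forall>k. k \<notin> I \<longrightarrow> x0$k = 0" and nx0: "norm x0 = 1" using x0 unfolding S_def by auto
  define v0 where "v0 k = x0$k" for k
  have v0I: "\<forall>k. k \<notin> I \<longrightarrow> v0 k = 0" using x0I v0_def by simp
  have Bv0: "Bq I M v0 v0 = c" unfolding c_def q_def v0_def by simp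
  have Nv0: "(\<Sum>k\<in>I. (v0 k)\<^sup>2) = 1" using nrm[OF x0I] nx0 unfolding v0_def by simp
  have eig: "(\<Sum>l\<in>I. M k l * v0 l) = c * v0 k" if kI: "k \<in> I" for k
  proof -
    define e where "e l = (if l = k then 1 else (0::real))" for l
    define a where "a = (\<Sum>l\<in>I. M k l * v0 l) - c * v0 k"
    have "2 * t * a + t\<^sup>2 * (M k k - c) \<le> 0" for t
    proof -
      have wI: "\<forall>l. l \<notin> I \<longrightarrow> v0 l + t * e l = 0" using v0I kI unfolding e_def by auto
      have 1: "Bq I M (\<lambda>l. v0 l + t * e l) (\<lambda>l. v0 l + t * e l) = c + 2 * t * (\<Sum>l\<in>I. M k l * v0 l) + t\<^sup>2 * M k k"
        using Bq_expand[OF sym, where u=v0 and t=t and w=e and I=I] Bv0 Bq_delta[OF kI finI] Bq_delta2[OF kI finI] unfolding e_def by simp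
      have "(\<Sum>l\<in>I. (v0 l + t * e l)\<^sup>2) = Bq I (\<lambda>k l. if k = l then 1 else 0) (\<lambda>l. v0 l + t * e l) (\<lambda>l. v0 l + t * e l)"
        using Bq_id[OF finI] by (simp add: power2_eq_square)
      also have "\<dots> = 1 + 2 * t * v0 k + t\<^sup>2"
      proof -
        have s: "\<forall>k l. (if k = l then 1 else 0::real) = (if l = k then 1 else 0)" by auto
        have "Bq I (\<lambda>k l. if k = l then 1 else 0) v0 v0 = 1" using Bq_id[OF finI] Nv0 by (simp add: power2_eq_square)
        moreover have "Bq I (\<lambda>k l. if k = l then 1 else 0) e v0 = v0 k"
          using Bq_delta[OF kI finI, of "\<lambda>k l. if k = l then 1 else 0" v0] unfolding e_def
          by (simp add: delta_sum[OF finI kI])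
        moreover have "Bq I (\<lambda>k l. if k = l then 1 else 0) e e = 1"
          using Bq_delta2[OF kI finI, of "\<lambda>k l. if k = l then 1 else 0"] unfolding e_def by simp
        ultimately show ?thesis using Bq_expand[OF s, where u=v0 and t=t and w=e and I=I] by simp
      qed
      finally have 2: "(\<Sum>l\<in>I. (v0 l + t * e l)\<^sup>2) = 1 + 2 * t * v0 k + t\<^sup>2" .
      have "c + 2 * t * (\<Sum>l\<in>I. M k l * v0 l) + t\<^sup>2 * M k k \<le> c * (1 + 2 * t * v0 k + t\<^sup>2)"
        using R[OF wI] 1 2 by simp
      then show ?thesis unfolding a_def by (simp add: algebra_simps)
    qed
    then have "a = 0" by (intro quad_zero) blast
    then show ?thesis unfolding a_def by simp
  qed
  have v0nz: "v0 \<noteq> (\<lambda>_. 0)" using Nv0 by auto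
  have cE: "c \<in> eigvals_on I M" unfolding eigvals_on_def using v0nz v0I eig by blast
  have cmax: "c \<le> lambda_max_on I M" unfolding lambda_max_on_def
    using eig_finite[OF sym] cE by simp
  define w where "w k = (if k \<in> I then v k else 0)" for k
  have "Bq I M v v = Bq I M w w" unfolding Bq_def w_def by simp
  also have "\<dots> \<le> c * (\<Sum>k\<in>I. (w k)\<^sup>2)" by (rule R) (simp add: w_def)
  also have "(\<Sum>k\<in>I. (w k)\<^sup>2) = (\<Sum>k\<in>I. (v k)\<^sup>2)" unfolding w_def by simp
  also have "c * (\<Sum>k\<in>I. (v k)\<^sup>2) \<le> lambda_max_on I M * (\<Sum>k\<in>I. (v k)\<^sup>2)"
    using cmax by (simp add: mult_right_mono sum_nonneg)
  finally show ?thesis .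
qed


lemma sum_sq_nonneg: "(\<Sum>k\<in>S. (f k)\<^sup>2) \<ge> (0::real)"
  by (simp add: sum_nonneg)

locale admm_loc =
  fixes X :: "'n::finite \<Rightarrow> 'p::finite \<Rightarrow> real" and y :: "'n \<Rightarrow> real"
    and lam \<mu> :: real and K :: nat and I :: "nat \<Rightarrow> 'p set"
  assumes lam: "lam \<ge> 0" and mu: "\<mu> > 0" and part: "is_partition K I"
begin

definition "NL = real (card (UNIV :: 'n set)) * lam"
definition "etak k = (\<Sum>i\<in>{1..K}. if k \<in> I i then eta X \<mu> I i else 0)"
definition "Aop b j = (\<Sum>k\<in>UNIV. gram X j k * b k)"
definition "Ai i b j = (\<Sum>k\<in>I i. gram X j k * b k)"
definition "Atu u k = (\<Sum>j\<in>UNIV. gram X j k * u j)"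
definition "Tb b u k = soft_thr (1 / etak k) (b k + Atu u k / etak k)"
definition "Tz z u j = clip (- NL) NL (z j - u j / \<mu>)"
definition "Tu b z u j = u j - \<mu> / (real K + 1) *
   (2 * (Aop (Tb b u) j - Tz z u j - Xty X y j) - (Aop b j - z j - Xty X y j))"
definition "HB b z u b' z' u' = (\<Sum>k\<in>UNIV. etak k * b k * b' k) + \<mu> * (\<Sum>j\<in>UNIV. z j * z' j)
   + (\<Sum>j\<in>UNIV. u j * (Aop b' j - z' j) + u' j * (Aop b j - z j)) + (real K + 1) / \<mu> * (\<Sum>j\<in>UNIV. u j * u' j)"
definition "HQ b z u = HB b z u b z u"

lemma NL_nonneg: "NL \<ge> 0" unfolding NL_def using lam by simp

lemma K1: "K \<ge> 1" using part unfolding is_partition_def by simp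

lemma part_ex: "\<exists>i\<in>{1..K}. k \<in> I i"
  using part unfolding is_partition_def by blast

lemma part_disj: "i \<in> {1..K} \<Longrightarrow> j \<in> {1..K} \<Longrightarrow> k \<in> I i \<Longrightarrow> k \<in> I j \<Longrightarrow> i = j"
  using part unfolding is_partition_def by blast

lemma etak_eq: assumes "i \<in> {1..K}" "k \<in> I i" shows "etak k = eta X \<mu> I i"
proof -
  have "etak k = (\<Sum>i'\<in>{1..K}. if i' = i then eta X \<mu> I i else 0)"
    unfolding etak_def
  proof (rule sum.cong[OF refl])
    fix i' assume i': "i' \<in> {1..K}"
    show "(if k \<in> I i' then eta X \<mu> I i' else 0) = (if i' = i then eta X \<mu> I i else 0)"
    proof (cases "i' = i")
      case False
      then have "k \<notin> I i'" using part_disj[OF i' assms(1) _ assms(2)] by blast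
      then show ?thesis using False by simp
    qed (use assms in simp)
  qed
  then show ?thesis using assms by simp
qed

lemma sum_part: "(\<Sum>i\<in>{1..K}. \<Sum>k\<in>I i. f k) = (\<Sum>k\<in>UNIV. f k)"
proof -
  have "(\<Sum>i\<in>{1..K}. \<Sum>k\<in>I i. f k) = sum f (\<Union>i\<in>{1..K}. I i)"
  proof (rule sum.UNION_disjoint[symmetric])
    show "\<forall>i\<in>{1..K}. \<forall>j\<in>{1..K}. i \<noteq> j \<longrightarrow> I i \<inter> I j = {}"
      using part unfolding is_partition_def by blast
  qed simp_all
  also have "(\<Union>i\<in>{1..K}. I i) = UNIV" using part unfolding is_partition_def by blast
  finally show ?thesis .
qed

lemma resid_eq: "resid X y K I b z j = Aop b j - z j - Xty X y j"
  unfolding resid_def Aop_def using sum_part[of "\<lambda>k. gram X j k * b k"] by simp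

lemma Aop_part: "Aop b j = (\<Sum>i\<in>{1..K}. Ai i b j)"
  unfolding Aop_def Ai_def using sum_part[of "\<lambda>k. gram X j k * b k"] by simp

lemma Aop_diff: "Aop (\<lambda>k. f k - g k) j = Aop f j - Aop g j"
  unfolding Aop_def by (simp add: right_diff_distrib sum_subtractf)

lemma Aop_add: "Aop (\<lambda>k. f k + g k) j = Aop f j + Aop g j"
  unfolding Aop_def by (simp add: distrib_left sum.distrib)

lemma Atu_diff: "Atu (\<lambda>k. f k - g k) j = Atu f j - Atu g j"
  unfolding Atu_def by (simp add: right_diff_distrib sum_subtractf)

lemma Atu_swap: "(\<Sum>k\<in>UNIV. Atu u k * d k) = (\<Sum>j\<in>UNIV. u j * Aop d j)"
proof -
  have "(\<Sum>k\<in>UNIV. Atu u k * d k) = (\<Sum>k\<in>UNIV. \<Sum>j\<in>UNIV. u j * (gram X j k * d k))"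
    unfolding Atu_def sum_distrib_right by (rule sum.cong[OF refl], rule sum.cong[OF refl]) simp
  also have "\<dots> = (\<Sum>j\<in>UNIV. \<Sum>k\<in>UNIV. u j * (gram X j k * d k))" by (rule sum.swap)
  also have "\<dots> = (\<Sum>j\<in>UNIV. u j * Aop d j)" unfolding Aop_def sum_distrib_left ..
  finally show ?thesis .
qed

lemma eta_props:
  assumes i: "i \<in> {1..K}"
  shows "eta X \<mu> I i \<ge> 1"
    and "\<mu> * (\<Sum>j\<in>UNIV. (Ai i v j)\<^sup>2) \<le> (eta X \<mu> I i - 1) * (\<Sum>k\<in>I i. (v k)\<^sup>2)"
proof -
  define M where "M k l = \<mu> * (\<Sum>j\<in>UNIV. gram X j k * gram X j l)" for k l
  have sym: "\<forall>k l. M k l = M l k" unfolding M_def by (simp add: mult.commute)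
  have ne: "I i \<noteq> {}" using part i unfolding is_partition_def by blast
  have em: "eta X \<mu> I i = lambda_max_on (I i) M + 1" unfolding eta_def M_def by simp
  have BqA: "Bq (I i) M w w = \<mu> * (\<Sum>j\<in>UNIV. (Ai i w j)\<^sup>2)" for w
  proof -
    have "Bq (I i) M w w = (\<Sum>k\<in>I i. \<Sum>l\<in>I i. \<mu> * (\<Sum>j\<in>UNIV. w k * gram X j k * gram X j l * w l))"
      unfolding Bq_def M_def
      by (rule sum.cong[OF refl], rule sum.cong[OF refl]) (simp add: sum_distrib_left sum_distrib_right mult_ac)
    also have "\<dots> = \<mu> * (\<Sum>k\<in>I i. \<Sum>l\<in>I i. \<Sum>j\<in>UNIV. w k * gram X j k * gram X j l * w l)"
      by (simp add: sum_distrib_left)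
    also have "(\<Sum>k\<in>I i. \<Sum>l\<in>I i. \<Sum>j\<in>UNIV. w k * gram X j k * gram X j l * w l)
        = (\<Sum>k\<in>I i. \<Sum>j\<in>UNIV. \<Sum>l\<in>I i. w k * gram X j k * gram X j l * w l)"
      by (rule sum.cong[OF refl], rule sum.swap)
    also have "\<dots> = (\<Sum>j\<in>UNIV. \<Sum>k\<in>I i. \<Sum>l\<in>I i. w k * gram X j k * gram X j l * w l)"
      by (rule sum.swap)
    also have "\<dots> = (\<Sum>j\<in>UNIV. (Ai i w j)\<^sup>2)"
      unfolding Ai_def power2_eq_square sum_product
      by (rule sum.cong[OF refl], rule sum.cong[OF refl], rule sum.cong[OF refl]) (simp add: mult_ac)
    finally show ?thesis .
  qed
  show 2: "\<mu> * (\<Sum>j\<in>UNIV. (Ai i v j)\<^sup>2) \<le> (eta X \<mu> I i - 1) * (\<Sum>k\<in>I i. (v k)\<^sup>2)"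
    using rayleigh[OF sym ne, of v] BqA em by simp
  obtain k0 where k0: "k0 \<in> I i" using ne by blast
  define e where "e k = (if k = k0 then 1 else (0::real))" for k
  have "(\<Sum>k\<in>I i. (e k)\<^sup>2) = 1"
  proof -
    have "(\<Sum>k\<in>I i. (e k)\<^sup>2) = (\<Sum>k\<in>I i. if k = k0 then 1 else 0)" unfolding e_def by (rule sum.cong) auto
    then show ?thesis using k0 by simp
  qed
  moreover have "\<mu> * (\<Sum>j\<in>UNIV. (Ai i e j)\<^sup>2) \<ge> 0" using mu by (simp add: sum_nonneg)
  ultimately show "eta X \<mu> I i \<ge> 1" using rayleigh[OF sym ne, of e] BqA[of e] em by simp
qed

lemma etak_ge1: "etak k \<ge> 1"
  using part_ex[of k] etak_eq eta_props(1) by metis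

lemma etak_pos: "etak k > 0" using etak_ge1[of k] by simp

lemma step:
  assumes "alg3 X y lam \<mu> K I \<beta> z u"
  shows "\<beta> (Suc t) = Tb (\<beta> t) (u t)" "z (Suc t) = Tz (z t) (u t)" "u (Suc t) = Tu (\<beta> t) (z t) (u t)"
proof -
  have a: "\<forall>i\<in>{1..K}. \<forall>k\<in>I i. \<beta> (Suc t) k =
         soft_thr (1 / eta X \<mu> I i) (\<beta> t k + (\<Sum>j\<in>UNIV. gram X j k * u t j) / eta X \<mu> I i)"
    and b: "\<forall>j. z (Suc t) j = min (max (z t j - u t j / \<mu>) (- (real (card (UNIV :: 'n set)) * lam))) (real (card (UNIV :: 'n set)) * lam)"
    and c: "\<forall>j. u (Suc t) j = u t j - \<mu> / (real K + 1) *
         (2 * resid X y K I (\<beta> (Suc t)) (z (Suc t)) j - resid X y K I (\<beta> t) (z t) j)"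
    using assms unfolding alg3_def by blast+
  show 1: "\<beta> (Suc t) = Tb (\<beta> t) (u t)"
  proof
    fix k
    obtain i where i: "i \<in> {1..K}" "k \<in> I i" using part_ex by blast
    show "\<beta> (Suc t) k = Tb (\<beta> t) (u t) k"
      using a i etak_eq[OF i] unfolding Tb_def Atu_def by simp
  qed
  show 2: "z (Suc t) = Tz (z t) (u t)"
    using b unfolding Tz_def clip_def NL_def by auto
  show "u (Suc t) = Tu (\<beta> t) (z t) (u t)"
    using c unfolding Tu_def resid_eq 1[symmetric] 2[symmetric] by auto
qed

end

lemma delta_l: "(\<Sum>l\<in>(UNIV::'a::finite set). f l * (if k = l then c else 0) * g l) = f k * c * (g k::real)"
proof -
  have "(\<Sum>l\<in>(UNIV::'a set). f l * (if k = l then c else 0) * g l) = (\<Sum>l\<in>UNIV. if l = k then f k * c * g k else 0)"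
    by (rule sum.cong) auto
  then show ?thesis by simp
qed

lemma delta_r: "(\<Sum>l\<in>(UNIV::'a::finite set). f l * (if l = k then c else 0) * g l) = f k * c * (g k::real)"
proof -
  have "(\<Sum>l\<in>(UNIV::'a set). f l * (if l = k then c else 0) * g l) = (\<Sum>l\<in>UNIV. if l = k then f k * c * g k else 0)"
    by (rule sum.cong) auto
  then show ?thesis by simp
qed

lemma delta_c: "(\<Sum>l\<in>(UNIV::'a::finite set). a * (if l = k then c else 0) * g l) = a * c * (g k::real)"
proof -
  have "(\<Sum>l\<in>(UNIV::'a set). a * (if l = k then c else 0) * g l) = (\<Sum>l\<in>UNIV. if l = k then a * c * g k else 0)"
    by (rule sum.cong) auto
  then show ?thesis by simp
qed

lemma delta_c': "(\<Sum>l\<in>(UNIV::'a::finite set). a * (if k = l then c else 0) * g l) = a * c * (g k::real)"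
proof -
  have "(\<Sum>l\<in>(UNIV::'a set). a * (if k = l then c else 0) * g l) = (\<Sum>l\<in>UNIV. if l = k then a * c * g k else 0)"
    by (rule sum.cong) auto
  then show ?thesis by simp
qed

lemma sumU: "(\<Sum>a\<in>(UNIV::(('p::finite + 'p) + 'p) set). f a) =
   (\<Sum>a\<in>UNIV. f (Inl (Inl a))) + (\<Sum>a\<in>UNIV. f (Inl (Inr a))) + (\<Sum>a\<in>UNIV. f (Inr a))"
proof -
  have "(UNIV::(('p + 'p) + 'p) set) = (UNIV <+> UNIV) <+> UNIV" by simp
  then have "(\<Sum>a\<in>(UNIV::(('p + 'p) + 'p) set). f a) = (\<Sum>a\<in>(UNIV <+> UNIV) <+> UNIV. f a)" by simp
  also have "\<dots> = (\<Sum>a\<in>UNIV. f (Inl (Inl a))) + (\<Sum>a\<in>UNIV. f (Inl (Inr a))) + (\<Sum>a\<in>UNIV. f (Inr a))"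
    by (simp add: sum.Plus o_def del: UNIV_Plus_UNIV)
  finally show ?thesis .
qed

context admm_loc
begin

lemma Lam_cases: "Lam X \<mu> K I (Inl k) (Inl l) = (if k = l then etak k else 0)"
  "Lam X \<mu> K I (Inr k) (Inr l) = (if k = l then \<mu> else 0)"
  "Lam X \<mu> K I (Inl k) (Inr l) = 0" "Lam X \<mu> K I (Inr k) (Inl l) = 0"
  unfolding Lam_def etak_def by simp_all

lemma HQ_expl: "HQ b z u = (\<Sum>k\<in>UNIV. etak k * b k * b k) + \<mu> * (\<Sum>j\<in>UNIV. z j * z j)
   + 2 * (\<Sum>j\<in>UNIV. u j * (Aop b j - z j)) + (real K + 1) / \<mu> * (\<Sum>j\<in>UNIV. u j * u j)"
  unfolding HQ_def HB_def by (simp add: sum.distrib sum_distrib_left)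

lemma Hnorm_gvec: "Hnorm_sq X \<mu> K I (gvec b z u) = HQ b z u"
proof -
  have s1: "(\<Sum>k\<in>UNIV. \<Sum>j\<in>UNIV. b k * gram X j k * u j) = (\<Sum>j\<in>UNIV. u j * Aop b j)"
    unfolding Aop_def sum_distrib_left by (subst sum.swap) (simp add: mult_ac)
  have s2: "(\<Sum>j\<in>UNIV. \<Sum>k\<in>UNIV. u j * gram X j k * b k) = (\<Sum>j\<in>UNIV. u j * Aop b j)"
    unfolding Aop_def sum_distrib_left by (simp add: mult_ac)
  have s3: "(\<Sum>k\<in>UNIV. \<Sum>j\<in>UNIV. z k * (if j = k then -1 else 0) * u j) = - (\<Sum>j\<in>UNIV. u j * z j)"
    by (simp only: delta_c) (simp add: sum_negf mult_ac)
  have s4: "(\<Sum>j\<in>UNIV. \<Sum>k\<in>UNIV. u j * (if j = k then -1 else 0) * z k) = - (\<Sum>j\<in>UNIV. u j * z j)"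
    by (simp only: delta_c') (simp add: sum_negf mult_ac)
  have s5: "(\<Sum>k\<in>UNIV. \<Sum>l\<in>UNIV. b k * (if k = l then etak k else 0) * b l) = (\<Sum>k\<in>UNIV. etak k * b k * b k)"
    by (simp only: delta_c') (simp add: mult_ac)
  have s6: "(\<Sum>k\<in>UNIV. \<Sum>l\<in>UNIV. z k * (if k = l then \<mu> else 0) * z l) = \<mu> * (\<Sum>j\<in>UNIV. z j * z j)"
    by (simp only: delta_c') (simp add: sum_distrib_left mult_ac)
  have s7: "(\<Sum>k\<in>UNIV. \<Sum>l\<in>UNIV. u k * (if k = l then (real K + 1) / \<mu> else 0) * u l) = (real K + 1) / \<mu> * (\<Sum>j\<in>UNIV. u j * u j)"
    by (simp only: delta_c') (simp add: sum_distrib_left mult_ac)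
  have "Hnorm_sq X \<mu> K I (gvec b z u) =
     (\<Sum>k\<in>UNIV. \<Sum>l\<in>UNIV. b k * (if k = l then etak k else 0) * b l)
   + (\<Sum>k\<in>UNIV. \<Sum>j\<in>UNIV. b k * gram X j k * u j)
   + (\<Sum>k\<in>UNIV. \<Sum>l\<in>UNIV. z k * (if k = l then \<mu> else 0) * z l)
   + (\<Sum>k\<in>UNIV. \<Sum>j\<in>UNIV. z k * (if j = k then -1 else 0) * u j)
   + (\<Sum>j\<in>UNIV. \<Sum>k\<in>UNIV. u j * gram X j k * b k)
   + (\<Sum>j\<in>UNIV. \<Sum>k\<in>UNIV. u j * (if j = k then -1 else 0) * z k)
   + (\<Sum>k\<in>UNIV. \<Sum>l\<in>UNIV. u k * (if k = l then (real K + 1) / \<mu> else 0) * u l)"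
    unfolding Hnorm_sq_def sumU
    by (simp add: Hmat_def Lam_cases Gmat_def gvec_def sum.distrib)
  also have "\<dots> = HQ b z u"
    unfolding s1 s2 s3 s4 s5 s6 s7 HQ_expl by (simp add: right_diff_distrib sum_subtractf)
  finally show ?thesis .
qed

lemma gvec_diff: "(\<lambda>a. gvec b z u a - gvec b' z' u' a) = gvec (\<lambda>k. b k - b' k) (\<lambda>k. z k - z' k) (\<lambda>k. u k - u' k)"
  by (rule ext) (simp add: gvec_def split: sum.split)

lemma Hnorm_diff: "Hnorm_sq X \<mu> K I (\<lambda>a. gvec b z u a - gvec b' z' u' a) =
    HQ (\<lambda>k. b k - b' k) (\<lambda>k. z k - z' k) (\<lambda>k. u k - u' k)"
  unfolding gvec_diff Hnorm_gvec ..

lemma HQ_add: "HQ (\<lambda>k. b k + b' k) (\<lambda>j. z j + z' j) (\<lambda>j. u j + u' j) = HQ b z u + 2 * HB b z u b' z' u' + HQ b' z' u'"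
proof -
  have 1: "(\<Sum>k\<in>UNIV. etak k * (b k + b' k) * (b k + b' k)) = (\<Sum>k\<in>UNIV. etak k * b k * b k) + 2 * (\<Sum>k\<in>UNIV. etak k * b k * b' k) + (\<Sum>k\<in>UNIV. etak k * b' k * b' k)"
    by (simp add: sum.distrib sum_distrib_left algebra_simps)
  have 2: "(\<Sum>j\<in>UNIV. (z j + z' j) * (z j + z' j)) = (\<Sum>j\<in>UNIV. z j * z j) + 2 * (\<Sum>j\<in>UNIV. z j * z' j) + (\<Sum>j\<in>UNIV. z' j * z' j)"
    by (simp add: sum.distrib sum_distrib_left algebra_simps)
  have 3: "(\<Sum>j\<in>UNIV. (u j + u' j) * (u j + u' j)) = (\<Sum>j\<in>UNIV. u j * u j) + 2 * (\<Sum>j\<in>UNIV. u j * u' j) + (\<Sum>j\<in>UNIV. u' j * u' j)"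
    by (simp add: sum.distrib sum_distrib_left algebra_simps)
  have 4: "(\<Sum>j\<in>UNIV. (u j + u' j) * (Aop b j + Aop b' j - (z j + z' j))) =
     (\<Sum>j\<in>UNIV. u j * (Aop b j - z j)) + (\<Sum>j\<in>UNIV. u j * (Aop b' j - z' j) + u' j * (Aop b j - z j)) + (\<Sum>j\<in>UNIV. u' j * (Aop b' j - z' j))"
    by (simp only: sum.distrib[symmetric]) (rule sum.cong[OF refl], simp add: algebra_simps)
  show ?thesis unfolding HQ_expl Aop_add 4 1 2 3 unfolding HB_def
    by (simp add: algebra_simps)
qed

end

context admm_loc
begin

lemma Tu_rel:
  "(real K + 1) / \<mu> * ((u j - Tu b z u j) - (u' j - Tu b' z' u' j)) =
   2 * ((Aop (Tb b u) j - Aop (Tb b' u') j) - (Tz z u j - Tz z' u' j)) - ((Aop b j - Aop b' j) - (z j - z' j))"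
proof -
  have k: "real K + 1 > 0" by simp
  have "u j - Tu b z u j = \<mu> / (real K + 1) * (2 * (Aop (Tb b u) j - Tz z u j - Xty X y j) - (Aop b j - z j - Xty X y j))"
    unfolding Tu_def by simp
  moreover have "u' j - Tu b' z' u' j = \<mu> / (real K + 1) * (2 * (Aop (Tb b' u') j - Tz z' u' j - Xty X y j) - (Aop b' j - z' j - Xty X y j))"
    unfolding Tu_def by simp
  ultimately show ?thesis using mu k by (simp add: field_simps)
qed

lemma firm_core:
  fixes b z u b' z' u'
  defines "db \<equiv> \<lambda>k. Tb b u k - Tb b' u' k" and "dz \<equiv> \<lambda>j. Tz z u j - Tz z' u' j"
    and "du \<equiv> \<lambda>j. Tu b z u j - Tu b' z' u' j"
    and "eb \<equiv> \<lambda>k. (b k - Tb b u k) - (b' k - Tb b' u' k)"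
    and "ez \<equiv> \<lambda>j. (z j - Tz z u j) - (z' j - Tz z' u' j)"
    and "eu \<equiv> \<lambda>j. (u j - Tu b z u j) - (u' j - Tu b' z' u' j)"
  shows "HB db dz du eb ez eu \<ge> 0"
proof -
  have pb: "(etak k * eb k + (Atu u k - Atu u' k)) * db k \<ge> 0" for k
  proof -
    define v where "v = b k + Atu u k / etak k"
    define v' where "v' = b' k + Atu u' k / etak k"
    have e: "etak k > 0" by (rule etak_pos)
    have a: "Tb b u k = soft_thr (1 / etak k) v" "Tb b' u' k = soft_thr (1 / etak k) v'"
      unfolding Tb_def v_def v'_def by simp_all
    have f: "((v - soft_thr (1 / etak k) v) - (v' - soft_thr (1 / etak k) v')) * (soft_thr (1 / etak k) v - soft_thr (1 / etak k) v') \<ge> 0"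
      by (rule soft_firm) (use e in simp)
    have "etak k * ((v - soft_thr (1 / etak k) v) - (v' - soft_thr (1 / etak k) v')) = etak k * eb k + (Atu u k - Atu u' k)"
      unfolding eb_def a using e by (simp add: v_def v'_def field_simps)
    then have "(etak k * eb k + (Atu u k - Atu u' k)) * db k =
        etak k * (((v - soft_thr (1 / etak k) v) - (v' - soft_thr (1 / etak k) v')) * (soft_thr (1 / etak k) v - soft_thr (1 / etak k) v'))"
      unfolding db_def a by (simp add: mult.assoc)
    then show ?thesis using f e by simp
  qed
  have pz: "(\<mu> * ez j - (u j - u' j)) * dz j \<ge> 0" for j
  proof -
    define v where "v = z j - u j / \<mu>"
    define v' where "v' = z' j - u' j / \<mu>"
    have lh: "- NL \<le> NL" using NL_nonneg by simp
    have a: "Tz z u j = clip (-NL) NL v" "Tz z' u' j = clip (-NL) NL v'"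
      unfolding Tz_def v_def v'_def by simp_all
    have f: "((v - clip (-NL) NL v) - (v' - clip (-NL) NL v')) * (clip (-NL) NL v - clip (-NL) NL v') \<ge> 0"
      by (rule clip_firm[OF lh])
    have "\<mu> * ((v - clip (-NL) NL v) - (v' - clip (-NL) NL v')) = \<mu> * ez j - (u j - u' j)"
      unfolding ez_def a using mu by (simp add: v_def v'_def field_simps)
    then have "(\<mu> * ez j - (u j - u' j)) * dz j =
        \<mu> * (((v - clip (-NL) NL v) - (v' - clip (-NL) NL v')) * (clip (-NL) NL v - clip (-NL) NL v'))"
      unfolding dz_def a by (simp add: mult.assoc)
    then show ?thesis using f mu by simp
  qed
  define P where "P = (\<Sum>k\<in>UNIV. (etak k * eb k + (Atu u k - Atu u' k)) * db k) + (\<Sum>j\<in>UNIV. (\<mu> * ez j - (u j - u' j)) * dz j)"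
  have P0: "P \<ge> 0" unfolding P_def using pb pz by (simp add: sum_nonneg add_nonneg_nonneg)
  have atu: "(\<Sum>k\<in>UNIV. (Atu u k - Atu u' k) * db k) = (\<Sum>j\<in>UNIV. (u j - u' j) * Aop db j)"
    using Atu_swap[of "\<lambda>j. u j - u' j" db] by (simp add: Atu_diff)
  have P2: "P = (\<Sum>k\<in>UNIV. etak k * db k * eb k) + \<mu> * (\<Sum>j\<in>UNIV. dz j * ez j) + (\<Sum>j\<in>UNIV. (u j - u' j) * (Aop db j - dz j))"
  proof -
    have "P = (\<Sum>k\<in>UNIV. etak k * db k * eb k) + (\<Sum>k\<in>UNIV. (Atu u k - Atu u' k) * db k)
        + (\<Sum>j\<in>UNIV. \<mu> * (dz j * ez j)) - (\<Sum>j\<in>UNIV. (u j - u' j) * dz j)"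
      unfolding P_def by (simp add: sum.distrib sum_subtractf algebra_simps)
    also have "\<dots> = (\<Sum>k\<in>UNIV. etak k * db k * eb k) + \<mu> * (\<Sum>j\<in>UNIV. dz j * ez j) + (\<Sum>j\<in>UNIV. (u j - u' j) * (Aop db j - dz j))"
      unfolding atu by (simp add: sum_distrib_left right_diff_distrib sum_subtractf)
    finally show ?thesis .
  qed
  have bb: "(\<lambda>k. b k - b' k) = (\<lambda>k. db k + eb k)" unfolding db_def eb_def by (rule ext) simp
  have Adb: "Aop db j = Aop (Tb b u) j - Aop (Tb b' u') j" for j unfolding db_def by (rule Aop_diff)
  have Abb: "Aop b j - Aop b' j = Aop db j + Aop eb j" for j
    using Aop_diff[of b b' j] Aop_add[of db eb j] bb by simp
  have eurel: "(real K + 1) / \<mu> * eu j = (Aop db j - dz j) - (Aop eb j - ez j)" for j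
  proof -
    have "(real K + 1) / \<mu> * eu j = 2 * (Aop db j - dz j) - ((Aop b j - Aop b' j) - (z j - z' j))"
      unfolding eu_def Tu_rel Adb dz_def ..
    also have "\<dots> = (Aop db j - dz j) - (Aop eb j - ez j)"
      unfolding Abb dz_def ez_def by simp
    finally show ?thesis .
  qed
  have uu: "eu j + du j = u j - u' j" for j unfolding eu_def du_def by simp
  have "HB db dz du eb ez eu = (\<Sum>k\<in>UNIV. etak k * db k * eb k) + \<mu> * (\<Sum>j\<in>UNIV. dz j * ez j)
      + ((\<Sum>j\<in>UNIV. du j * (Aop eb j - ez j) + eu j * (Aop db j - dz j)) + (\<Sum>j\<in>UNIV. du j * ((real K + 1) / \<mu> * eu j)))"
    unfolding HB_def by (simp add: sum_distrib_left mult_ac)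
  also have "(\<Sum>j\<in>UNIV. du j * (Aop eb j - ez j) + eu j * (Aop db j - dz j)) + (\<Sum>j\<in>UNIV. du j * ((real K + 1) / \<mu> * eu j))
      = (\<Sum>j\<in>UNIV. (u j - u' j) * (Aop db j - dz j))"
    unfolding eurel sum.distrib[symmetric] uu[symmetric] by (rule sum.cong[OF refl]) (simp add: algebra_simps)
  finally have "HB db dz du eb ez eu = P" unfolding P2 .
  then show ?thesis using P0 by simp
qed

lemma nonexp:
  "HQ (\<lambda>k. Tb b u k - Tb b' u' k) (\<lambda>j. Tz z u j - Tz z' u' j) (\<lambda>j. Tu b z u j - Tu b' z' u' j)
   + HQ (\<lambda>k. (b k - Tb b u k) - (b' k - Tb b' u' k)) (\<lambda>j. (z j - Tz z u j) - (z' j - Tz z' u' j)) (\<lambda>j. (u j - Tu b z u j) - (u' j - Tu b' z' u' j))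
   \<le> HQ (\<lambda>k. b k - b' k) (\<lambda>j. z j - z' j) (\<lambda>j. u j - u' j)"
proof -
  have e1: "(\<lambda>k. b k - b' k) = (\<lambda>k. (Tb b u k - Tb b' u' k) + ((b k - Tb b u k) - (b' k - Tb b' u' k)))" by (rule ext) simp
  have e2: "(\<lambda>j. z j - z' j) = (\<lambda>j. (Tz z u j - Tz z' u' j) + ((z j - Tz z u j) - (z' j - Tz z' u' j)))" by (rule ext) simp
  have e3: "(\<lambda>j. u j - u' j) = (\<lambda>j. (Tu b z u j - Tu b' z' u' j) + ((u j - Tu b z u j) - (u' j - Tu b' z' u' j)))" by (rule ext) simp
  show ?thesis unfolding e1 e2 e3 HQ_add using firm_core[of b u b' u' z z'] by simp
qed

end

lemma sq_split: "(x::real)\<^sup>2 \<le> 2 * (x + a)\<^sup>2 + 2 * a\<^sup>2"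
proof -
  have "0 \<le> (x + 2 * a)\<^sup>2" by simp
  then show ?thesis by (simp add: power2_eq_square algebra_simps)
qed

context admm_loc
begin

lemma HQ_lower:
  "HQ b z u \<ge> (\<Sum>k\<in>UNIV. (b k)\<^sup>2) + \<mu> * (\<Sum>j\<in>UNIV. (Ai 1 b j + u j / \<mu>)\<^sup>2) + \<mu> * (\<Sum>j\<in>UNIV. (z j - u j / \<mu>)\<^sup>2)"
proof -
  define SU where "SU = (\<Sum>j\<in>UNIV. u j * u j)"
  define W where "W i = \<mu> * (\<Sum>j\<in>UNIV. (Ai i b j + u j / \<mu>)\<^sup>2)" for i
  define Z where "Z = \<mu> * (\<Sum>j\<in>UNIV. (z j - u j / \<mu>)\<^sup>2)"
  define B where "B i = eta X \<mu> I i * (\<Sum>k\<in>I i. (b k)\<^sup>2) + 2 * (\<Sum>j\<in>UNIV. u j * Ai i b j) + SU / \<mu>" for i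
  have A1: "(\<Sum>k\<in>UNIV. etak k * b k * b k) = (\<Sum>i\<in>{1..K}. eta X \<mu> I i * (\<Sum>k\<in>I i. (b k)\<^sup>2))"
  proof -
    have "(\<Sum>k\<in>UNIV. etak k * b k * b k) = (\<Sum>i\<in>{1..K}. \<Sum>k\<in>I i. etak k * b k * b k)"
      using sum_part[of "\<lambda>k. etak k * b k * b k"] by simp
    also have "\<dots> = (\<Sum>i\<in>{1..K}. eta X \<mu> I i * (\<Sum>k\<in>I i. (b k)\<^sup>2))"
    proof (rule sum.cong[OF refl])
      fix i assume i: "i \<in> {1..K}"
      have "(\<Sum>k\<in>I i. etak k * b k * b k) = (\<Sum>k\<in>I i. eta X \<mu> I i * (b k)\<^sup>2)"
        by (rule sum.cong[OF refl]) (simp add: etak_eq[OF i] power2_eq_square)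
      then show "(\<Sum>k\<in>I i. etak k * b k * b k) = eta X \<mu> I i * (\<Sum>k\<in>I i. (b k)\<^sup>2)"
        by (simp add: sum_distrib_left)
    qed
    finally show ?thesis .
  qed
  have A2: "(\<Sum>j\<in>UNIV. u j * (Aop b j - z j)) = (\<Sum>i\<in>{1..K}. \<Sum>j\<in>UNIV. u j * Ai i b j) - (\<Sum>j\<in>UNIV. u j * z j)"
  proof -
    have "(\<Sum>j\<in>UNIV. u j * (Aop b j - z j)) = (\<Sum>j\<in>UNIV. \<Sum>i\<in>{1..K}. u j * Ai i b j) - (\<Sum>j\<in>UNIV. u j * z j)"
      unfolding Aop_part by (simp add: right_diff_distrib sum_subtractf sum_distrib_left)
    also have "(\<Sum>j\<in>UNIV. \<Sum>i\<in>{1..K}. u j * Ai i b j) = (\<Sum>i\<in>{1..K}. \<Sum>j\<in>UNIV. u j * Ai i b j)"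
      by (rule sum.swap)
    finally show ?thesis .
  qed
  have A3: "(real K + 1) / \<mu> * SU = (\<Sum>i\<in>{1..K}. SU / \<mu>) + SU / \<mu>"
    using mu by (simp add: field_simps)
  have A4: "Z = \<mu> * (\<Sum>j\<in>UNIV. z j * z j) - 2 * (\<Sum>j\<in>UNIV. u j * z j) + SU / \<mu>"
  proof -
    have "Z = (\<Sum>j\<in>UNIV. \<mu> * (z j * z j) - 2 * (u j * z j) + u j * u j / \<mu>)"
      unfolding Z_def sum_distrib_left
      by (rule sum.cong[OF refl]) (use mu in \<open>simp add: power2_eq_square field_simps\<close>)
    also have "\<dots> = \<mu> * (\<Sum>j\<in>UNIV. z j * z j) - 2 * (\<Sum>j\<in>UNIV. u j * z j) + SU / \<mu>"
      unfolding SU_def by (simp add: sum.distrib sum_subtractf sum_distrib_left sum_divide_distrib)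
    finally show ?thesis .
  qed
  have HQe: "HQ b z u = (\<Sum>i\<in>{1..K}. B i) + Z"
    unfolding HQ_expl A1 A4 B_def sum.distrib SU_def[symmetric] A2 A3
    by (simp add: sum_distrib_left algebra_simps)
  have Bi: "B i \<ge> (\<Sum>k\<in>I i. (b k)\<^sup>2) + W i" if i: "i \<in> {1..K}" for i
  proof -
    have "W i = \<mu> * (\<Sum>j\<in>UNIV. (Ai i b j)\<^sup>2) + 2 * (\<Sum>j\<in>UNIV. u j * Ai i b j) + SU / \<mu>"
    proof -
      have "W i = (\<Sum>j\<in>UNIV. \<mu> * (Ai i b j)\<^sup>2 + 2 * (u j * Ai i b j) + u j * u j / \<mu>)"
        unfolding W_def sum_distrib_left
        by (rule sum.cong[OF refl]) (use mu in \<open>simp add: power2_eq_square field_simps\<close>)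
      also have "\<dots> = \<mu> * (\<Sum>j\<in>UNIV. (Ai i b j)\<^sup>2) + 2 * (\<Sum>j\<in>UNIV. u j * Ai i b j) + SU / \<mu>"
        unfolding SU_def by (simp add: sum.distrib sum_distrib_left sum_divide_distrib)
      finally show ?thesis .
    qed
    then show ?thesis using eta_props(2)[OF i, of b] unfolding B_def by (simp add: algebra_simps)
  qed
  have W0: "W i \<ge> 0" for i unfolding W_def using mu by (simp add: sum_nonneg)
  have s1: "(\<Sum>i\<in>{1..K}. B i) \<ge> (\<Sum>i\<in>{1..K}. (\<Sum>k\<in>I i. (b k)\<^sup>2) + W i)"
    by (rule sum_mono) (rule Bi)
  have s2: "(\<Sum>i\<in>{1..K}. (\<Sum>k\<in>I i. (b k)\<^sup>2) + W i) = (\<Sum>k\<in>UNIV. (b k)\<^sup>2) + (\<Sum>i\<in>{1..K}. W i)"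
    by (simp only: sum.distrib sum_part)
  have s3: "(\<Sum>i\<in>{1..K}. W i) \<ge> W 1"
    by (rule member_le_sum) (use K1 W0 in auto)
  have "(\<Sum>i\<in>{1..K}. B i) \<ge> (\<Sum>k\<in>UNIV. (b k)\<^sup>2) + W 1" using s1 s2 s3 by linarith
  then show ?thesis unfolding HQe W_def Z_def by simp
qed

lemma HQ_coercive: "\<exists>c>0. \<forall>b z u. c * ((\<Sum>k\<in>UNIV. (b k)\<^sup>2) + (\<Sum>j\<in>UNIV. (z j)\<^sup>2) + (\<Sum>j\<in>UNIV. (u j)\<^sup>2)) \<le> HQ b z u"
proof -
  define e1 where "e1 = eta X \<mu> I 1"
  have i1: "1 \<in> {1..K}" using K1 by simp
  have e1g: "e1 \<ge> 1" unfolding e1_def by (rule eta_props(1)[OF i1])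
  define C where "C = 1 + 2 * e1 * \<mu> + (2 + 4 * e1) / \<mu>"
  have Cp: "C > 0" unfolding C_def using mu e1g by (simp add: add_pos_nonneg)
  have main: "(\<Sum>k\<in>UNIV. (b k)\<^sup>2) + (\<Sum>j\<in>UNIV. (z j)\<^sup>2) + (\<Sum>j\<in>UNIV. (u j)\<^sup>2) \<le> C * HQ b z u" for b z u
  proof -
    define SB where "SB = (\<Sum>k\<in>UNIV. (b k)\<^sup>2)"
    define SZ where "SZ = (\<Sum>j\<in>UNIV. (z j)\<^sup>2)"
    define SU where "SU = (\<Sum>j\<in>UNIV. (u j)\<^sup>2)"
    define W where "W = \<mu> * (\<Sum>j\<in>UNIV. (Ai 1 b j + u j / \<mu>)\<^sup>2)"
    define Z where "Z = \<mu> * (\<Sum>j\<in>UNIV. (z j - u j / \<mu>)\<^sup>2)"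
    define H where "H = HQ b z u"
    have low: "SB + W + Z \<le> H" unfolding SB_def W_def Z_def H_def by (rule HQ_lower)
    have SB0: "SB \<ge> 0" "W \<ge> 0" "Z \<ge> 0" unfolding SB_def W_def Z_def using mu by (simp_all add: sum_nonneg)
    have AS: "\<mu> * (\<Sum>j\<in>UNIV. (Ai 1 b j)\<^sup>2) \<le> (e1 - 1) * SB"
    proof -
      have "(\<Sum>k\<in>I 1. (b k)\<^sup>2) \<le> SB" unfolding SB_def by (rule sum_mono2) auto
      then have "(e1 - 1) * (\<Sum>k\<in>I 1. (b k)\<^sup>2) \<le> (e1 - 1) * SB" using e1g by (simp add: mult_left_mono)
      then show ?thesis using eta_props(2)[OF i1, of b] unfolding e1_def by simp
    qed
    have SUb: "SU / \<mu> \<le> 2 * W + 2 * (\<mu> * (\<Sum>j\<in>UNIV. (Ai 1 b j)\<^sup>2))"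
    proof -
      have "SU / \<mu> = \<mu> * (\<Sum>j\<in>UNIV. (u j / \<mu>)\<^sup>2)"
        unfolding SU_def sum_distrib_left sum_divide_distrib
        by (rule sum.cong[OF refl]) (use mu in \<open>simp add: power2_eq_square field_simps\<close>)
      also have "\<dots> \<le> \<mu> * (\<Sum>j\<in>UNIV. 2 * (Ai 1 b j + u j / \<mu>)\<^sup>2 + 2 * (Ai 1 b j)\<^sup>2)"
        using mu sq_split[of "u j / \<mu>" "Ai 1 b j" for j]
        by (intro mult_left_mono sum_mono) (auto simp: add.commute)
      also have "\<dots> = 2 * W + 2 * (\<mu> * (\<Sum>j\<in>UNIV. (Ai 1 b j)\<^sup>2))"
        unfolding W_def by (simp add: sum.distrib sum_distrib_left algebra_simps)
      finally show ?thesis .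
    qed
    have SZb: "\<mu> * SZ \<le> 2 * Z + 2 * (SU / \<mu>)"
    proof -
      have "\<mu> * SZ \<le> \<mu> * (\<Sum>j\<in>UNIV. 2 * (z j - u j / \<mu>)\<^sup>2 + 2 * (u j / \<mu>)\<^sup>2)"
        unfolding SZ_def using mu sq_split[of "z j" "- (u j / \<mu>)" for j]
        by (intro mult_left_mono sum_mono) auto
      also have "\<dots> = 2 * Z + 2 * (\<mu> * (\<Sum>j\<in>UNIV. (u j / \<mu>)\<^sup>2))"
        unfolding Z_def by (simp add: sum.distrib sum_distrib_left algebra_simps)
      also have "\<mu> * (\<Sum>j\<in>UNIV. (u j / \<mu>)\<^sup>2) = SU / \<mu>"
        unfolding SU_def sum_distrib_left sum_divide_distrib
        by (rule sum.cong[OF refl]) (use mu in \<open>simp add: power2_eq_square field_simps\<close>)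
      finally show ?thesis .
    qed
    have h1: "SB \<le> H" "W \<le> H" "Z \<le> H" using low SB0 by linarith+
    have h2: "SU / \<mu> \<le> 2 * e1 * H"
    proof -
      have "(e1 - 1) * SB \<le> (e1 - 1) * H" using h1 e1g by (simp add: mult_left_mono)
      then show ?thesis using SUb AS h1 by (simp add: algebra_simps)
    qed
    have h3: "SU \<le> 2 * e1 * \<mu> * H"
    proof -
      have "SU = \<mu> * (SU / \<mu>)" using mu by simp
      also have "\<dots> \<le> \<mu> * (2 * e1 * H)" by (rule mult_left_mono) (use h2 mu in auto)
      finally show ?thesis by (simp add: mult_ac)
    qed
    have h4: "SZ \<le> (2 + 4 * e1) / \<mu> * H"
    proof -
      have h2': "SU / \<mu> \<le> 2 * (e1 * H)" using h2 by (simp add: mult.assoc)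
      have "\<mu> * SZ \<le> 2 * H + 4 * (e1 * H)" using SZb h1 h2' by linarith
      then have "\<mu> * SZ \<le> (2 + 4 * e1) * H" by (simp add: algebra_simps)
      then show ?thesis using mu by (simp add: field_simps)
    qed
    have "SB + SZ + SU \<le> H + (2 + 4 * e1) / \<mu> * H + 2 * e1 * \<mu> * H" using h1 h3 h4 by linarith
    also have "\<dots> = C * H" unfolding C_def by (simp add: algebra_simps)
    finally show ?thesis unfolding SB_def SZ_def SU_def H_def .
  qed
  show ?thesis
  proof (intro exI[of _ "1 / C"] conjI allI)
    show "1 / C > 0" using Cp by simp
    fix b z u
    show "1 / C * ((\<Sum>k\<in>UNIV. (b k)\<^sup>2) + (\<Sum>j\<in>UNIV. (z j)\<^sup>2) + (\<Sum>j\<in>UNIV. (u j)\<^sup>2)) \<le> HQ b z u"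
      using main[of b z u] Cp by (simp add: field_simps)
  qed
qed

end

context admm_loc
begin

definition "KKT b z u \<longleftrightarrow> (\<forall>j. Aop b j - z j - Xty X y j = 0) \<and> (\<forall>j. \<bar>z j\<bar> \<le> NL) \<and>
   (\<forall>k c. \<bar>c\<bar> \<ge> \<bar>b k\<bar> + Atu u k * (c - b k)) \<and> (\<forall>j c. \<bar>c\<bar> \<le> NL \<longrightarrow> u j * (c - z j) \<ge> 0)"

definition "fixp b z u \<longleftrightarrow> Tb b u = b \<and> Tz z u = z \<and> Tu b z u = u"

lemma lagr_eq: "lagr X y lam K I b z u = ereal ((\<Sum>k\<in>UNIV. \<bar>b k\<bar>) - (\<Sum>j\<in>UNIV. u j * (Aop b j - z j - Xty X y j)))
   + (if (\<forall>j. \<bar>z j\<bar> \<le> NL) then 0 else \<infinity>)"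
  unfolding lagr_def resid_eq sum_part NL_def by simp

lemma Tb_fix_iff: "Tb b u = b \<longleftrightarrow> (\<forall>k c. \<bar>c\<bar> \<ge> \<bar>b k\<bar> + Atu u k * (c - b k))"
proof -
  have eq: "Tb b u k = soft_thr (1 / etak k) (b k + 1 / etak k * Atu u k)" for k
    unfolding Tb_def by simp
  have p: "1 / etak k > 0" for k using etak_pos[of k] by simp
  show ?thesis
  proof
    assume "Tb b u = b"
    then have "soft_thr (1 / etak k) (b k + 1 / etak k * Atu u k) = b k" for k by (metis eq)
    then show "\<forall>k c. \<bar>c\<bar> \<ge> \<bar>b k\<bar> + Atu u k * (c - b k)" using soft_fixed_sub[OF p] by blast
  next
    assume "\<forall>k c. \<bar>c\<bar> \<ge> \<bar>b k\<bar> + Atu u k * (c - b k)"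
    then have "soft_thr (1 / etak k) (b k + 1 / etak k * Atu u k) = b k" for k using soft_fixed_sup[OF p] by blast
    then show "Tb b u = b" using eq by auto
  qed
qed

lemma Tz_fix_iff: "Tz z u = z \<longleftrightarrow> (\<forall>j. \<bar>z j\<bar> \<le> NL) \<and> (\<forall>j c. \<bar>c\<bar> \<le> NL \<longrightarrow> u j * (c - z j) \<ge> 0)"
proof -
  have lh: "- NL \<le> NL" using NL_nonneg by simp
  show ?thesis
  proof
    assume a: "Tz z u = z"
    have "clip (-NL) NL (z j - u j / \<mu>) = z j" for j using a unfolding Tz_def by metis
    from clip_fixed_sub[OF mu lh this] show "(\<forall>j. \<bar>z j\<bar> \<le> NL) \<and> (\<forall>j c. \<bar>c\<bar> \<le> NL \<longrightarrow> u j * (c - z j) \<ge> 0)"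
      by (simp add: abs_le_iff) (meson abs_le_iff minus_le_iff)
  next
    assume a: "(\<forall>j. \<bar>z j\<bar> \<le> NL) \<and> (\<forall>j c. \<bar>c\<bar> \<le> NL \<longrightarrow> u j * (c - z j) \<ge> 0)"
    have "clip (-NL) NL (z j - u j / \<mu>) = z j" for j
    proof (rule clip_fixed_sup[OF mu])
      have "\<bar>z j\<bar> \<le> NL" using a by blast
      then show "- NL \<le> z j" "z j \<le> NL" by arith+
      show "\<forall>c. - NL \<le> c \<and> c \<le> NL \<longrightarrow> 0 \<le> u j * (c - z j)"
      proof (intro allI impI)
        fix c assume "- NL \<le> c \<and> c \<le> NL"
        then have "\<bar>c\<bar> \<le> NL" by arith
        then show "0 \<le> u j * (c - z j)" using a by blast
      qed
    qed
    then show "Tz z u = z" unfolding Tz_def by auto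
  qed
qed

lemma fixp_iff: "fixp b z u \<longleftrightarrow> KKT b z u"
proof
  assume f: "fixp b z u"
  then have tb: "Tb b u = b" and tz: "Tz z u = z" and tu: "Tu b z u = u" unfolding fixp_def by auto
  have r: "\<forall>j. Aop b j - z j - Xty X y j = 0"
  proof
    fix j
    have "Tu b z u j = u j - \<mu> / (real K + 1) * (Aop b j - z j - Xty X y j)"
      unfolding Tu_def tb tz by simp
    then have "\<mu> / (real K + 1) * (Aop b j - z j - Xty X y j) = 0" using tu by simp
    moreover have "\<mu> / (real K + 1) \<noteq> 0" using mu by simp
    ultimately show "Aop b j - z j - Xty X y j = 0" by simp
  qed
  have "\<forall>k c. \<bar>c\<bar> \<ge> \<bar>b k\<bar> + Atu u k * (c - b k)" using Tb_fix_iff[of b u] tb by simp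
  moreover have "(\<forall>j. \<bar>z j\<bar> \<le> NL) \<and> (\<forall>j c. \<bar>c\<bar> \<le> NL \<longrightarrow> u j * (c - z j) \<ge> 0)" using Tz_fix_iff[of z u] tz by simp
  ultimately show "KKT b z u" unfolding KKT_def using r by blast
next
  assume k: "KKT b z u"
  then have r: "\<forall>j. Aop b j - z j - Xty X y j = 0" unfolding KKT_def by blast
  have tb: "Tb b u = b" using k Tb_fix_iff unfolding KKT_def by blast
  have tz: "Tz z u = z" using k Tz_fix_iff unfolding KKT_def by blast
  have tu: "Tu b z u = u" unfolding Tu_def tb tz using r by simp
  show "fixp b z u" unfolding fixp_def using tb tz tu by blast
qed

lemma KKT_saddle: assumes "KKT b z u" shows "saddle X y lam K I b z u"
proof -
  have r: "\<forall>j. Aop b j - z j - Xty X y j = 0" and box: "\<forall>j. \<bar>z j\<bar> \<le> NL"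
    and sb: "\<forall>k c. \<bar>c\<bar> \<ge> \<bar>b k\<bar> + Atu u k * (c - b k)"
    and sz: "\<forall>j c. \<bar>c\<bar> \<le> NL \<longrightarrow> u j * (c - z j) \<ge> 0" using assms unfolding KKT_def by blast+
  have L0: "lagr X y lam K I b z u' = ereal (\<Sum>k\<in>UNIV. \<bar>b k\<bar>)" for u'
    unfolding lagr_eq using r box by simp
  have L2: "ereal (\<Sum>k\<in>UNIV. \<bar>b k\<bar>) \<le> lagr X y lam K I b' z' u" for b' z'
  proof (cases "\<forall>j. \<bar>z' j\<bar> \<le> NL")
    case False
    then have "lagr X y lam K I b' z' u = \<infinity>" unfolding lagr_eq by simp
    then show ?thesis by simp
  next
    case True
    have xty: "Xty X y j = Aop b j - z j" for j using r by (metis diff_eq_eq eq_iff_diff_eq_0)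
    have "(\<Sum>j\<in>UNIV. u j * (Aop b' j - z' j - Xty X y j))
        = (\<Sum>j\<in>UNIV. u j * Aop (\<lambda>k. b' k - b k) j) - (\<Sum>j\<in>UNIV. u j * (z' j - z j))"
    proof -
      have "(\<Sum>j\<in>UNIV. u j * (Aop b' j - z' j - Xty X y j)) = (\<Sum>j\<in>UNIV. u j * Aop (\<lambda>k. b' k - b k) j - u j * (z' j - z j))"
        unfolding xty Aop_diff by (rule sum.cong[OF refl]) (simp add: algebra_simps)
      then show ?thesis by (simp only: sum_subtractf)
    qed
    also have "(\<Sum>j\<in>UNIV. u j * Aop (\<lambda>k. b' k - b k) j) = (\<Sum>k\<in>UNIV. Atu u k * (b' k - b k))"
      using Atu_swap[of u "\<lambda>k. b' k - b k"] by simp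
    also have "\<dots> \<le> (\<Sum>k\<in>UNIV. \<bar>b' k\<bar> - \<bar>b k\<bar>)" 
    proof (rule sum_mono)
      fix k
      have "\<bar>b' k\<bar> \<ge> \<bar>b k\<bar> + Atu u k * (b' k - b k)" using sb by blast
      then show "Atu u k * (b' k - b k) \<le> \<bar>b' k\<bar> - \<bar>b k\<bar>" by linarith
    qed
    also have "(\<Sum>j\<in>UNIV. u j * (z' j - z j)) \<ge> 0" by (rule sum_nonneg) (use sz True in blast)
    ultimately have "(\<Sum>j\<in>UNIV. u j * (Aop b' j - z' j - Xty X y j)) \<le> (\<Sum>k\<in>UNIV. \<bar>b' k\<bar>) - (\<Sum>k\<in>UNIV. \<bar>b k\<bar>)"
      by (simp add: sum_subtractf)
    then show ?thesis unfolding lagr_eq using True by simp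
  qed
  show ?thesis unfolding saddle_def using L0 L2 by simp
qed

lemma saddle_KKT: assumes s: "saddle X y lam K I b z u" shows "KKT b z u"
proof -
  have s1: "\<And>u'. lagr X y lam K I b z u' \<le> lagr X y lam K I b z u"
    and s2: "\<And>b' z'. lagr X y lam K I b z u \<le> lagr X y lam K I b' z' u" using s unfolding saddle_def by blast+
  have box: "\<forall>j. \<bar>z j\<bar> \<le> NL"
  proof (rule ccontr)
    assume "\<not> (\<forall>j. \<bar>z j\<bar> \<le> NL)"
    then have "lagr X y lam K I b z u = \<infinity>" unfolding lagr_eq by simp
    moreover have "lagr X y lam K I b (\<lambda>_. 0) u \<noteq> \<infinity>" unfolding lagr_eq using NL_nonneg by simp
    ultimately show False using s2[of b "\<lambda>_. 0"] by simp
  qed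
  define r where "r j = Aop b j - z j - Xty X y j" for j
  define S where "S = (\<Sum>k\<in>UNIV. \<bar>b k\<bar>)"
  have L: "lagr X y lam K I b z u' = ereal (S - (\<Sum>j\<in>UNIV. u' j * r j))" for u'
    unfolding lagr_eq r_def S_def using box by simp
  have "S - (\<Sum>j\<in>UNIV. (u j - r j) * r j) \<le> S - (\<Sum>j\<in>UNIV. u j * r j)"
    using s1[of "\<lambda>j. u j - r j"] unfolding L by simp
  then have "(\<Sum>j\<in>UNIV. (r j)\<^sup>2) \<le> 0" by (simp add: algebra_simps sum_subtractf power2_eq_square)
  then have r0: "\<forall>j. r j = 0"
    using sum_nonneg_eq_0_iff[of UNIV "\<lambda>j. (r j)\<^sup>2"] by (simp add: antisym sum_nonneg)
  have L2: "S \<le> (\<Sum>k\<in>UNIV. \<bar>b' k\<bar>) - (\<Sum>j\<in>UNIV. u j * (Aop b' j - z' j - Xty X y j))"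
    if "\<forall>j. \<bar>z' j\<bar> \<le> NL" for b' z'
  proof -
    have "lagr X y lam K I b z u = ereal S" using L[of u] r0 by simp
    then show ?thesis using s2[of b' z'] that unfolding lagr_eq by simp
  qed
  have xty: "Xty X y j = Aop b j - z j" for j using r0 unfolding r_def by (metis diff_eq_eq eq_iff_diff_eq_0)
  have sb: "\<bar>c\<bar> \<ge> \<bar>b k\<bar> + Atu u k * (c - b k)" for k c
  proof -
    define b' where "b' = b(k := c)"
    have d: "(\<lambda>l. b' l - b l) = (\<lambda>l. if l = k then c - b k else 0)" unfolding b'_def by auto
    have "(\<Sum>l\<in>UNIV. \<bar>b' l\<bar>) - S = (\<Sum>l\<in>UNIV. \<bar>b' l\<bar> - \<bar>b l\<bar>)" unfolding S_def by (simp add: sum_subtractf)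
    also have "\<dots> = (\<Sum>l\<in>UNIV. if l = k then \<bar>c\<bar> - \<bar>b k\<bar> else 0)" by (rule sum.cong) (auto simp: b'_def)
    finally have e1: "(\<Sum>l\<in>UNIV. \<bar>b' l\<bar>) - S = \<bar>c\<bar> - \<bar>b k\<bar>" by simp
    have "(\<Sum>j\<in>UNIV. u j * (Aop b' j - z j - Xty X y j)) = (\<Sum>j\<in>UNIV. u j * Aop (\<lambda>l. b' l - b l) j)"
      unfolding xty Aop_diff by simp
    also have "\<dots> = (\<Sum>l\<in>UNIV. Atu u l * (b' l - b l))" using Atu_swap[of u "\<lambda>l. b' l - b l"] by simp
    also have "\<dots> = (\<Sum>l\<in>UNIV. if l = k then Atu u k * (c - b k) else 0)" by (rule sum.cong) (auto simp: b'_def)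
    finally have e2: "(\<Sum>j\<in>UNIV. u j * (Aop b' j - z j - Xty X y j)) = Atu u k * (c - b k)" by simp
    show ?thesis using L2[OF box, of b'] e1 e2 by simp
  qed
  have sz: "u j * (c - z j) \<ge> 0" if c: "\<bar>c\<bar> \<le> NL" for j c
  proof -
    define z' where "z' = z(j := c)"
    have bx: "\<forall>i. \<bar>z' i\<bar> \<le> NL" using box c unfolding z'_def by auto
    have "(\<Sum>i\<in>UNIV. u i * (Aop b i - z' i - Xty X y i)) = (\<Sum>i\<in>UNIV. if i = j then - (u j * (c - z j)) else 0)"
      unfolding xty by (rule sum.cong) (auto simp: z'_def algebra_simps)
    then have "(\<Sum>i\<in>UNIV. u i * (Aop b i - z' i - Xty X y i)) = - (u j * (c - z j))" by simp
    then show ?thesis using L2[OF bx, of b] unfolding S_def by simp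
  qed
  show ?thesis unfolding KKT_def using r0 box sb sz unfolding r_def by blast
qed

lemma saddle_fixp: "saddle X y lam K I b z u \<longleftrightarrow> fixp b z u"
  using saddle_KKT KKT_saddle fixp_iff by blast

end

lemma rate_gen:
  fixes d e :: "nat \<Rightarrow> real"
  assumes d0: "\<And>t. d t \<ge> 0" and e0: "\<And>t. e t \<ge> 0"
    and f: "\<And>t. e (Suc t) + d t \<le> e t" and m: "\<And>t. d (Suc t) \<le> d t"
  shows "d T \<le> e 0 / (real T + 1)" and "e T \<le> e 0"
proof -
  have tele: "e (Suc T) + (\<Sum>t\<le>T. d t) \<le> e 0" for T
  proof (induction T)
    case 0 then show ?case using f[of 0] by simp
  next
    case (Suc T)
    then show ?case using f[of "Suc T"] by simp
  qed
  have dec: "d T \<le> d t" if "t \<le> T" for t T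
    using that
  proof (induction T)
    case 0 then show ?case by simp
  next
    case (Suc T)
    then show ?case using m[of T] by (cases "t = Suc T") (auto simp: le_Suc_eq)
  qed
  have "(real T + 1) * d T = (\<Sum>t\<le>T. d T)" by simp
  also have "\<dots> \<le> (\<Sum>t\<le>T. d t)" by (rule sum_mono) (simp add: dec)
  also have "\<dots> \<le> e 0" using tele[of T] e0[of "Suc T"] by linarith
  finally show "d T \<le> e 0 / (real T + 1)" by (simp add: field_simps mult.commute)
  show "e T \<le> e 0"
  proof (induction T)
    case (Suc T) then show ?case using f[of T] d0[of T] by linarith
  qed simp
qed

lemma dec_sub_zero:
  fixes s :: "nat \<Rightarrow> real"
  assumes "\<And>t. s (Suc t) \<le> s t" "\<And>t. s t \<ge> 0" "strict_mono r" "(s \<circ> r) \<longlonglongrightarrow> 0"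
  shows "s \<longlonglongrightarrow> 0"
proof -
  have "decseq s" using assms(1) by (rule decseq_SucI)
  then obtain L where L: "s \<longlonglongrightarrow> L" using decseq_convergent[of s 0] assms(2) by blast
  then have "(s \<circ> r) \<longlonglongrightarrow> L" using assms(3) by (rule LIMSEQ_subseq_LIMSEQ)
  then have "L = 0" using assms(4) LIMSEQ_unique by blast
  then show ?thesis using L by simp
qed


context admm_loc
begin

lemma HQ_nonneg: "HQ b z u \<ge> 0"
proof -
  obtain c where c: "c > 0" "\<forall>b z u. c * ((\<Sum>k\<in>UNIV. (b k)\<^sup>2) + (\<Sum>j\<in>UNIV. (z j)\<^sup>2) + (\<Sum>j\<in>UNIV. (u j)\<^sup>2)) \<le> HQ b z u"
    using HQ_coercive by blast
  have "0 \<le> c * ((\<Sum>k\<in>UNIV. (b k)\<^sup>2) + (\<Sum>j\<in>UNIV. (z j)\<^sup>2) + (\<Sum>j\<in>UNIV. (u j)\<^sup>2))"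
    using c(1) by (simp add: sum_nonneg)
  then show ?thesis using c(2) by (meson order_trans)
qed

lemma comp_bound:
  assumes c: "c > 0" "\<forall>b z u. c * ((\<Sum>k\<in>UNIV. (b k)\<^sup>2) + (\<Sum>j\<in>UNIV. (z j)\<^sup>2) + (\<Sum>j\<in>UNIV. (u j)\<^sup>2)) \<le> HQ b z u"
  shows "(b k)\<^sup>2 \<le> HQ b z u / c" "(z k)\<^sup>2 \<le> HQ b z u / c" "(u k)\<^sup>2 \<le> HQ b z u / c"
proof -
  have S: "(\<Sum>k\<in>UNIV. (b k)\<^sup>2) + (\<Sum>j\<in>UNIV. (z j)\<^sup>2) + (\<Sum>j\<in>UNIV. (u j)\<^sup>2) \<le> HQ b z u / c"
  proof -
    have cS: "c * ((\<Sum>k\<in>UNIV. (b k)\<^sup>2) + (\<Sum>j\<in>UNIV. (z j)\<^sup>2) + (\<Sum>j\<in>UNIV. (u j)\<^sup>2)) \<le> HQ b z u"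
      using c(2) by blast
    then show ?thesis using c(1) by (metis pos_le_divide_eq mult.commute)
  qed
  have "(b k)\<^sup>2 \<le> (\<Sum>k\<in>UNIV. (b k)\<^sup>2)" "(z k)\<^sup>2 \<le> (\<Sum>k\<in>UNIV. (z k)\<^sup>2)" "(u k)\<^sup>2 \<le> (\<Sum>k\<in>UNIV. (u k)\<^sup>2)"
    by (rule member_le_sum; simp)+
  moreover have "(\<Sum>k\<in>UNIV. (b k)\<^sup>2) \<ge> 0" "(\<Sum>k\<in>UNIV. (z k)\<^sup>2) \<ge> 0" "(\<Sum>k\<in>UNIV. (u k)\<^sup>2) \<ge> 0"
    by (simp_all add: sum_nonneg)
  ultimately show "(b k)\<^sup>2 \<le> HQ b z u / c" "(z k)\<^sup>2 \<le> HQ b z u / c" "(u k)\<^sup>2 \<le> HQ b z u / c"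
    using S by linarith+
qed

lemma HQ_to0_comps:
  assumes "(\<lambda>n. HQ (B n) (Z n) (U n)) \<longlonglongrightarrow> 0"
  shows "(\<lambda>n. B n k) \<longlonglongrightarrow> 0" "(\<lambda>n. Z n k) \<longlonglongrightarrow> 0" "(\<lambda>n. U n k) \<longlonglongrightarrow> 0"
proof -
  obtain c where c: "c > 0" "\<forall>b z u. c * ((\<Sum>k\<in>UNIV. (b k)\<^sup>2) + (\<Sum>j\<in>UNIV. (z j)\<^sup>2) + (\<Sum>j\<in>UNIV. (u j)\<^sup>2)) \<le> HQ b z u"
    using HQ_coercive by blast
  have sq: "(\<lambda>n. sqrt (HQ (B n) (Z n) (U n) / c)) \<longlonglongrightarrow> 0"
    using tendsto_real_sqrt[OF tendsto_divide[OF assms tendsto_const[of c]]] c(1) by simp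
  have gen: "(\<lambda>n. f n) \<longlonglongrightarrow> 0" if "\<And>n. (f n)\<^sup>2 \<le> HQ (B n) (Z n) (U n) / c" for f :: "nat \<Rightarrow> real"
  proof -
    have "(\<lambda>n. \<bar>f n\<bar>) \<longlonglongrightarrow> 0"
    proof (rule real_tendsto_sandwich[OF _ _ tendsto_const sq])
      show "\<forall>\<^sub>F n in sequentially. 0 \<le> \<bar>f n\<bar>" by simp
      show "\<forall>\<^sub>F n in sequentially. \<bar>f n\<bar> \<le> sqrt (HQ (B n) (Z n) (U n) / c)"
        using that by (simp add: real_le_rsqrt)
    qed
    then show ?thesis by (simp add: tendsto_rabs_zero_iff)
  qed
  show "(\<lambda>n. B n k) \<longlonglongrightarrow> 0" by (rule gen) (rule comp_bound[OF c])
  show "(\<lambda>n. Z n k) \<longlonglongrightarrow> 0" by (rule gen) (rule comp_bound[OF c])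
  show "(\<lambda>n. U n k) \<longlonglongrightarrow> 0" by (rule gen) (rule comp_bound[OF c])
qed

lemma comps_to0_HQ:
  assumes "\<And>k. (\<lambda>n. B n k) \<longlonglongrightarrow> 0" "\<And>k. (\<lambda>n. Z n k) \<longlonglongrightarrow> 0" "\<And>k. (\<lambda>n. U n k) \<longlonglongrightarrow> 0"
  shows "(\<lambda>n. HQ (B n) (Z n) (U n)) \<longlonglongrightarrow> 0"
proof -
  have "(\<lambda>n. HQ (B n) (Z n) (U n)) \<longlonglongrightarrow> HQ (\<lambda>_. 0) (\<lambda>_. 0) (\<lambda>_. 0)"
    unfolding HQ_expl Aop_def by (intro tendsto_intros assms)
  moreover have "HQ (\<lambda>_. 0) (\<lambda>_. 0) (\<lambda>_. 0) = 0" unfolding HQ_expl Aop_def by simp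
  ultimately show ?thesis by simp
qed

lemma fejer:
  assumes "fixp bs zs us"
  shows "HQ (\<lambda>k. Tb b u k - bs k) (\<lambda>j. Tz z u j - zs j) (\<lambda>j. Tu b z u j - us j)
   + HQ (\<lambda>k. b k - Tb b u k) (\<lambda>j. z j - Tz z u j) (\<lambda>j. u j - Tu b z u j)
   \<le> HQ (\<lambda>k. b k - bs k) (\<lambda>j. z j - zs j) (\<lambda>j. u j - us j)"
proof -
  have f: "Tb bs us = bs" "Tz zs us = zs" "Tu bs zs us = us" using assms unfolding fixp_def by auto
  show ?thesis using nonexp[where b=b and u=u and b'=bs and u'=us and z=z and z'=zs] unfolding f by simp
qed

lemma nonexp2:
  "HQ (\<lambda>k. Tb b u k - Tb b' u' k) (\<lambda>j. Tz z u j - Tz z' u' j) (\<lambda>j. Tu b z u j - Tu b' z' u' j)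
   \<le> HQ (\<lambda>k. b k - b' k) (\<lambda>j. z j - z' j) (\<lambda>j. u j - u' j)"
  using nonexp[where b=b and u=u and b'=b' and u'=u' and z=z and z'=z'] HQ_nonneg by (meson add_increasing2 order_trans order_refl)

end

context admm_loc
begin

theorem main:
  assumes alg: "alg3 X y lam \<mu> K I \<beta> z u"
    and ex: "\<exists>\<beta>s zs us. saddle X y lam K I \<beta>s zs us"
  shows "\<exists>\<beta>s zs us. saddle X y lam K I \<beta>s zs us \<and>
           (\<forall>k. (\<lambda>t. \<beta> t k) \<longlonglongrightarrow> \<beta>s k) \<and>
           (\<forall>k. (\<lambda>t. z t k) \<longlonglongrightarrow> zs k) \<and>
           (\<forall>k. (\<lambda>t. u t k) \<longlonglongrightarrow> us k) \<and>
           (\<forall>T::nat. T > 0 \<longrightarrow>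
              Hnorm_sq X \<mu> K I (\<lambda>a. gvec (\<beta> T) (z T) (u T) a - gvec (\<beta> (Suc T)) (z (Suc T)) (u (Suc T)) a)
              \<le> 1 / (real T + 1) *
                Hnorm_sq X \<mu> K I (\<lambda>a. gvec (\<beta> 0) (z 0) (u 0) a - gvec \<beta>s zs us a))"
proof -
  note st = step[OF alg]
  define dd where "dd t = HQ (\<lambda>k. \<beta> t k - \<beta> (Suc t) k) (\<lambda>j. z t j - z (Suc t) j) (\<lambda>j. u t j - u (Suc t) j)" for t
  define E where "E bs zs us t = HQ (\<lambda>k. \<beta> t k - bs k) (\<lambda>j. z t j - zs j) (\<lambda>j. u t j - us j)" for bs zs us t
  have dd0: "dd t \<ge> 0" for t unfolding dd_def by (rule HQ_nonneg)
  have E0: "E bs zs us t \<ge> 0" for bs zs us t unfolding E_def by (rule HQ_nonneg)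
  have ddm: "dd (Suc t) \<le> dd t" for t
    using nonexp2[where b="\<beta> t" and u="u t" and z="z t" and b'="\<beta> (Suc t)" and u'="u (Suc t)" and z'="z (Suc t)"]
    unfolding dd_def st[symmetric] .
  have Ef: "E bs zs us (Suc t) + dd t \<le> E bs zs us t" if f: "fixp bs zs us" for bs zs us t
    using fejer[OF f, where b="\<beta> t" and u="u t" and z="z t"] unfolding dd_def E_def st[symmetric] .
  have rate: "dd T \<le> E bs zs us 0 / (real T + 1)" "E bs zs us T \<le> E bs zs us 0" if f: "fixp bs zs us" for bs zs us T
    using rate_gen[of dd "E bs zs us", OF dd0 E0 Ef[OF f] ddm] by blast+
  have Edec: "E bs zs us (Suc t) \<le> E bs zs us t" if f: "fixp bs zs us" for bs zs us t
    using Ef[OF f, of t] dd0[of t] by linarith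
  obtain bs0 zs0 us0 where s0: "saddle X y lam K I bs0 zs0 us0" using ex by blast
  have f0: "fixp bs0 zs0 us0" using s0 saddle_fixp by blast
  define R0 where "R0 = E bs0 zs0 us0 0"
  obtain c where c: "c > 0" "\<forall>b z u. c * ((\<Sum>k\<in>UNIV. (b k)\<^sup>2) + (\<Sum>j\<in>UNIV. (z j)\<^sup>2) + (\<Sum>j\<in>UNIV. (u j)\<^sup>2)) \<le> HQ b z u"
    using HQ_coercive by blast
  have ddlim: "dd \<longlonglongrightarrow> 0"
  proof (rule real_tendsto_sandwich[OF _ _ tendsto_const])
    show "\<forall>\<^sub>F n in sequentially. 0 \<le> dd n" using dd0 by simp
    show "\<forall>\<^sub>F n in sequentially. dd n \<le> R0 * inverse (real (Suc n))"
      using rate(1)[OF f0] unfolding R0_def by (simp add: divide_inverse add.commute)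
    show "(\<lambda>n. R0 * inverse (real (Suc n))) \<longlonglongrightarrow> 0"
      using tendsto_mult[OF tendsto_const LIMSEQ_inverse_real_of_nat, of R0] by simp
  qed
  have dlim: "(\<lambda>n. \<beta> n k - \<beta> (Suc n) k) \<longlonglongrightarrow> 0" "(\<lambda>n. z n k - z (Suc n) k) \<longlonglongrightarrow> 0"
    "(\<lambda>n. u n k - u (Suc n) k) \<longlonglongrightarrow> 0" for k
    using HQ_to0_comps[of "\<lambda>n k. \<beta> n k - \<beta> (Suc n) k" "\<lambda>n j. z n j - z (Suc n) j" "\<lambda>n j. u n j - u (Suc n) j"]
      ddlim unfolding dd_def by blast+
  define Mx where "Mx a = \<bar>gvec bs0 zs0 us0 a\<bar> + sqrt (R0 / c)" for a
  have cb: "\<bar>x - xs\<bar> \<le> sqrt (R0 / c)" if "(x - xs)\<^sup>2 \<le> E bs0 zs0 us0 t / c" for x xs t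
  proof -
    have "E bs0 zs0 us0 t / c \<le> R0 / c" using rate(2)[OF f0, of t] c(1) unfolding R0_def by (simp add: divide_right_mono)
    then have "\<bar>x - xs\<bar>\<^sup>2 \<le> R0 / c" using that by simp
    then show ?thesis by (rule real_le_rsqrt)
  qed
  define V :: "nat \<Rightarrow> real^(('p + 'p) + 'p)" where "V t = (\<chi> a. gvec (\<beta> t) (z t) (u t) a)" for t
  have Vb: "\<bar>V t $ a\<bar> \<le> Mx a" for t a
  proof -
    have "\<bar>gvec (\<beta> t) (z t) (u t) a - gvec bs0 zs0 us0 a\<bar> \<le> sqrt (R0 / c)"
    proof (cases a)
      case (Inl a')
      then show ?thesis
      proof (cases a')
        case (Inl k)
        show ?thesis unfolding \<open>a = Inl a'\<close> Inl gvec_def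
          by simp (rule cb, unfold E_def, rule comp_bound(1)[OF c])
      next
        case (Inr k)
        show ?thesis unfolding \<open>a = Inl a'\<close> Inr gvec_def
          by simp (rule cb, unfold E_def, rule comp_bound(2)[OF c])
      qed
    next
      case (Inr k)
      show ?thesis unfolding Inr gvec_def
        by simp (rule cb, unfold E_def, rule comp_bound(3)[OF c])
    qed
    then show ?thesis unfolding V_def Mx_def by simp
  qed
  have "bounded (range V)"
    unfolding bounded_iff
  proof (intro exI ballI)
    fix x assume "x \<in> range V"
    then obtain t where "x = V t" by blast
    have "norm (V t) \<le> (\<Sum>a\<in>UNIV. \<bar>V t $ a\<bar>)" by (rule norm_le_l1_cart)
    also have "\<dots> \<le> (\<Sum>a\<in>UNIV. Mx a)" by (rule sum_mono) (rule Vb)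
    finally show "norm x \<le> (\<Sum>a\<in>UNIV. Mx a)" using \<open>x = V t\<close> by simp
  qed
  then obtain l r where r: "strict_mono (r :: nat \<Rightarrow> nat)" and lim: "(V \<circ> r) \<longlonglongrightarrow> l"
    using bounded_imp_convergent_subsequence by blast
  define bb where "bb k = l $ Inl (Inl k)" for k
  define zz where "zz k = l $ Inl (Inr k)" for k
  define uu where "uu k = l $ Inr k" for k
  have cvb: "(\<lambda>n. \<beta> (r n) k) \<longlonglongrightarrow> bb k" for k
    using tendsto_vec_nth[OF lim, of "Inl (Inl k)"] unfolding bb_def V_def by (simp add: gvec_def)
  have cvz: "(\<lambda>n. z (r n) k) \<longlonglongrightarrow> zz k" for k
    using tendsto_vec_nth[OF lim, of "Inl (Inr k)"] unfolding zz_def V_def by (simp add: gvec_def)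
  have cvu: "(\<lambda>n. u (r n) k) \<longlonglongrightarrow> uu k" for k
    using tendsto_vec_nth[OF lim, of "Inr k"] unfolding uu_def V_def by (simp add: gvec_def)
  have sub0: "(\<lambda>n. E bb zz uu (r n)) \<longlonglongrightarrow> 0"
    unfolding E_def
    by (rule comps_to0_HQ) (use cvb cvz cvu in \<open>auto intro: LIM_zero\<close>)
  have T0: "(\<lambda>n. HQ (\<lambda>k. \<beta> (Suc (r n)) k - Tb bb uu k) (\<lambda>j. z (Suc (r n)) j - Tz zz uu j)
       (\<lambda>j. u (Suc (r n)) j - Tu bb zz uu j)) \<longlonglongrightarrow> 0"
  proof (rule real_tendsto_sandwich[OF _ _ tendsto_const sub0])
    show "\<forall>\<^sub>F n in sequentially. 0 \<le> HQ (\<lambda>k. \<beta> (Suc (r n)) k - Tb bb uu k) (\<lambda>j. z (Suc (r n)) j - Tz zz uu j)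
       (\<lambda>j. u (Suc (r n)) j - Tu bb zz uu j)" by (simp add: HQ_nonneg)
    show "\<forall>\<^sub>F n in sequentially. HQ (\<lambda>k. \<beta> (Suc (r n)) k - Tb bb uu k) (\<lambda>j. z (Suc (r n)) j - Tz zz uu j)
       (\<lambda>j. u (Suc (r n)) j - Tu bb zz uu j) \<le> E bb zz uu (r n)"
      using nonexp2[where b="\<beta> (r n)" and u="u (r n)" and z="z (r n)" and b'=bb and u'=uu and z'=zz for n]
      unfolding E_def st[symmetric] by simp
  qed
  have sucl: "(\<lambda>n. \<beta> (Suc (r n)) k) \<longlonglongrightarrow> bb k" "(\<lambda>n. z (Suc (r n)) k) \<longlonglongrightarrow> zz k"
      "(\<lambda>n. u (Suc (r n)) k) \<longlonglongrightarrow> uu k" for k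
  proof -
    have "(\<lambda>n. \<beta> (r n) k - (\<beta> (r n) k - \<beta> (Suc (r n)) k)) \<longlonglongrightarrow> bb k - 0"
      using tendsto_diff[OF cvb[of k] LIMSEQ_subseq_LIMSEQ[OF dlim(1)[of k] r]] by (simp add: o_def)
    then show "(\<lambda>n. \<beta> (Suc (r n)) k) \<longlonglongrightarrow> bb k" by simp
    have "(\<lambda>n. z (r n) k - (z (r n) k - z (Suc (r n)) k)) \<longlonglongrightarrow> zz k - 0"
      using tendsto_diff[OF cvz[of k] LIMSEQ_subseq_LIMSEQ[OF dlim(2)[of k] r]] by (simp add: o_def)
    then show "(\<lambda>n. z (Suc (r n)) k) \<longlonglongrightarrow> zz k" by simp
    have "(\<lambda>n. u (r n) k - (u (r n) k - u (Suc (r n)) k)) \<longlonglongrightarrow> uu k - 0"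
      using tendsto_diff[OF cvu[of k] LIMSEQ_subseq_LIMSEQ[OF dlim(3)[of k] r]] by (simp add: o_def)
    then show "(\<lambda>n. u (Suc (r n)) k) \<longlonglongrightarrow> uu k" by simp
  qed
  have sucT: "(\<lambda>n. \<beta> (Suc (r n)) k) \<longlonglongrightarrow> Tb bb uu k" "(\<lambda>n. z (Suc (r n)) k) \<longlonglongrightarrow> Tz zz uu k"
      "(\<lambda>n. u (Suc (r n)) k) \<longlonglongrightarrow> Tu bb zz uu k" for k
  proof -
    note h = HQ_to0_comps[OF T0]
    show "(\<lambda>n. \<beta> (Suc (r n)) k) \<longlonglongrightarrow> Tb bb uu k" using h(1)[of k] by (simp add: LIM_zero_iff)
    show "(\<lambda>n. z (Suc (r n)) k) \<longlonglongrightarrow> Tz zz uu k" using h(2)[of k] by (simp add: LIM_zero_iff)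
    show "(\<lambda>n. u (Suc (r n)) k) \<longlonglongrightarrow> Tu bb zz uu k" using h(3)[of k] by (simp add: LIM_zero_iff)
  qed
  have fx: "fixp bb zz uu"
    unfolding fixp_def using LIMSEQ_unique[OF sucl(1) sucT(1)] LIMSEQ_unique[OF sucl(2) sucT(2)]
      LIMSEQ_unique[OF sucl(3) sucT(3)] by auto
  have sad: "saddle X y lam K I bb zz uu" using fx saddle_fixp by blast
  have Elim: "E bb zz uu \<longlonglongrightarrow> 0"
    by (rule dec_sub_zero[of "E bb zz uu", OF Edec[OF fx] E0 r]) (simp add: o_def sub0)
  have full: "(\<lambda>t. \<beta> t k - bb k) \<longlonglongrightarrow> 0" "(\<lambda>t. z t k - zz k) \<longlonglongrightarrow> 0" "(\<lambda>t. u t k - uu k) \<longlonglongrightarrow> 0" for k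
    using HQ_to0_comps[of "\<lambda>t k. \<beta> t k - bb k" "\<lambda>t j. z t j - zz j" "\<lambda>t j. u t j - uu j"] Elim
    unfolding E_def by blast+
  have conv: "(\<lambda>t. \<beta> t k) \<longlonglongrightarrow> bb k" "(\<lambda>t. z t k) \<longlonglongrightarrow> zz k" "(\<lambda>t. u t k) \<longlonglongrightarrow> uu k" for k
    using full[of k] by (simp_all add: LIM_zero_iff)
  have rt: "Hnorm_sq X \<mu> K I (\<lambda>a. gvec (\<beta> T) (z T) (u T) a - gvec (\<beta> (Suc T)) (z (Suc T)) (u (Suc T)) a)
              \<le> 1 / (real T + 1) * Hnorm_sq X \<mu> K I (\<lambda>a. gvec (\<beta> 0) (z 0) (u 0) a - gvec bb zz uu a)" for T
    unfolding Hnorm_diff using rate(1)[OF fx, of T] unfolding dd_def E_def by simp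
  show ?thesis using sad conv rt by blast
qed

end

theorem theorem3:
  fixes X :: "'n::finite \<Rightarrow> 'p::finite \<Rightarrow> real" and y :: "'n \<Rightarrow> real"
    and lam \<mu> :: real and K :: nat and I :: "nat \<Rightarrow> 'p set"
    and \<beta> z u :: "nat \<Rightarrow> 'p \<Rightarrow> real"
  assumes "lam \<ge> 0" and "\<mu> > 0" and "is_partition K I"
    and "alg3 X y lam \<mu> K I \<beta> z u"
    and "\<exists>\<beta>s zs us. saddle X y lam K I \<beta>s zs us"
  shows "\<exists>\<beta>s zs us. saddle X y lam K I \<beta>s zs us \<and>
           (\<forall>k. (\<lambda>t. \<beta> t k) \<longlonglongrightarrow> \<beta>s k) \<and>
           (\<forall>k. (\<lambda>t. z t k) \<longlonglongrightarrow> zs k) \<and>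
           (\<forall>k. (\<lambda>t. u t k) \<longlonglongrightarrow> us k) \<and>
           (\<forall>T::nat. T > 0 \<longrightarrow>
              Hnorm_sq X \<mu> K I (\<lambda>a. gvec (\<beta> T) (z T) (u T) a - gvec (\<beta> (Suc T)) (z (Suc T)) (u (Suc T)) a)
              \<le> 1 / (real T + 1) *
                Hnorm_sq X \<mu> K I (\<lambda>a. gvec (\<beta> 0) (z 0) (u 0) a - gvec \<beta>s zs us a))"
  proof -
  interpret admm_loc X y lam \<mu> K I using assms(1-3) by unfold_locales
  show ?thesis using main[OF assms(4) assms(5)] .
qed

end
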